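(* Let $d\ge 3$. An $\mathcal L_d$-structure $\mathcal M$ with domain $\mathbb M$ is a model of $\mathrm{PQM}_d$ if and only if there exists a strong $\mathcal L_d$-morphism $\kappa:\mathbb M\to\mathbb H_d$ from $\mathcal M$ to $\mathcal H_d$ such that $\kappa(\mathbb M)\ne\{\bot\}$.
   Context: Notation. For $d\ge 1$, $\mathbb H_d$ is the set of complex linear subspaces of $\mathbb C^d$, ordered by inclusion $\le$, with $\top=\mathbb C^d$, $\bot=\{0\}$, $p^\bot$ the orthogonal complement, $p\wedge q=p\cap q$ and $p\vee q=p+q$. $\mathbb U_d$ is the set of unitary operators on $\mathbb C^d$, and for $U\in\mathbb U_d$, $p\in\mathbb H_d$, $U(p)=\{Uv: v\in p\}$. The Sasaki projection is $p\,\&\,q := q\cap(q^\bot+p)$. Subspaces $p,q$ are compatible iff $p=(p\wedge q)\vee(p\wedge q^\bot)$. Language $\mathcal L_d$: a first-order language without equality and without constants, having a unary function symbol $u_U$ for each $U\in\mathbb U_d$, a unary function symbol $\pi_q$ for each $q\in\mathbb H_d$, and a unary relation symbol $[\,\cdot:p]$ for each $p\in\mathbb H_d$. Theory $\mathrm{PQM}_d$ (over $\mathcal L_d$) has the following axioms, for all $p,q\in\mathbb H_d$ and $U\in\mathbb U_d$: ($\neg\bot$) $\exists x\,\neg[x:\bot]$; ($\top$) $\forall x\,[x:\top]$; ($\le$) if $p\le q$: $\forall x\,([x:p]\to[x:q])$; ($\wedge$) if $p,q$ are compatible: $\forall x\,([x:p]\wedge[x:q]\to[x:p\wedge q])$;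 ($\pi_i$) $\forall x\,([x:p]\to[\pi_q(x):p\,\&\,q])$; ($\pi_c$) if $p\le q$: $\forall x\,([\pi_p(\pi_q(x)):\bot]\to[\pi_p(x):\bot])$; ($\pi_\bot$) $\forall x\,([\pi_q(x):\bot]\to[x:q^\bot])$; ($u_i$) $\forall x\,([x:p]\to[u_U(x):U(p)])$; ($u_e$) $\forall x\,([u_U(x):p]\to[x:U^{-1}(p)])$. Hilbert model $\mathcal H_d$: the $\mathcal L_d$-structure with domain $\mathbb H_d$, $u_U^{\mathcal H_d}(x)=U(x)$, $\pi_q^{\mathcal H_d}(x)=x\,\&\,q$, and $[x:p]^{\mathcal H_d}$ holds iff $x\le p$. Strong $\mathcal L_d$-morphism: a map $\kappa:\mathbb M\to\mathbb H_d$ such that for all $m\in\mathbb M$: $[m:p]^{\mathcal M}\iff\kappa(m)\le p$ for every $p\in\mathbb H_d$; $\kappa(\pi_q^{\mathcal M}(m))=\kappa(m)\,\&\,q$ for every $q\in\mathbb H_d$; and $\kappa(u_U^{\mathcal M}(m))=U(\kappa(m))$ for every $U\in\mathbb U_d$. *)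

theory Defs
  imports "HOL-Analysis.Analysis"
begin

text \<open>Complex d-space is modelled as complex^'n with CARD('n) = d.\<close>

definition cinner :: "complex^'n \<Rightarrow> complex^'n \<Rightarrow> complex" where
  "cinner v w = (\<Sum>i\<in>UNIV. cnj (v$i) * w$i)"

definition csubspace :: "(complex^'n) set \<Rightarrow> bool" where
  "csubspace S \<longleftrightarrow> 0 \<in> S \<and> (\<forall>x\<in>S. \<forall>y\<in>S. x + y \<in> S) \<and> (\<forall>c. \<forall>x\<in>S. c *s x \<in> S)"

definition Hd :: "(complex^'n) set set" where
  "Hd = {S. csubspace S}"

definition orth :: "(complex^'n) set \<Rightarrow> (complex^'n) set" where
  "orth S = {v. \<forall>w\<in>S. cinner w v = 0}"

definition ssum :: "(complex^'n) set \<Rightarrow> (complex^'n) set \<Rightarrow> (complex^'n) set" where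
  "ssum A B = {a + b | a b. a \<in> A \<and> b \<in> B}"

definition bot_sp :: "(complex^'n) set" where
  "bot_sp = {0}"

definition top_sp :: "(complex^'n) set" where
  "top_sp = UNIV"

definition sasaki :: "(complex^'n) set \<Rightarrow> (complex^'n) set \<Rightarrow> (complex^'n) set" where
  "sasaki p q = q \<inter> ssum (orth q) p"

definition compatible :: "(complex^'n) set \<Rightarrow> (complex^'n) set \<Rightarrow> bool" where
  "compatible p q \<longleftrightarrow> p = ssum (p \<inter> q) (p \<inter> orth q)"

definition cadjoint :: "complex^'n^'n \<Rightarrow> complex^'n^'n" where
  "cadjoint U = (\<chi> i j. cnj (U$j$i))"

definition Ud :: "(complex^'n^'n) set" where
  "Ud = {U. U ** cadjoint U = mat 1 \<and> cadjoint U ** U = mat 1}"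

definition app_op :: "complex^'n^'n \<Rightarrow> (complex^'n) set \<Rightarrow> (complex^'n) set" where
  "app_op U p = (\<lambda>v. U *v v) ` p"

text \<open>An L_d-structure with domain UNIV :: 'm set: interpretations of u_U, pi_q and [_:p].\<close>
record ('m, 'n) lstruct =
  u_fun :: "complex^'n^'n \<Rightarrow> 'm \<Rightarrow> 'm"
  pi_fun :: "(complex^'n) set \<Rightarrow> 'm \<Rightarrow> 'm"
  rel :: "(complex^'n) set \<Rightarrow> 'm \<Rightarrow> bool"

definition PQM_model :: "('m, 'n::finite) lstruct \<Rightarrow> bool" where
  "PQM_model M \<longleftrightarrow>
     (\<exists>x. \<not> rel M bot_sp x) \<and>
     (\<forall>x. rel M top_sp x) \<and>
     (\<forall>p\<in>Hd. \<forall>q\<in>Hd. p \<subseteq> q \<longrightarrow> (\<forall>x. rel M p x \<longrightarrow> rel M q x)) \<and>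
     (\<forall>p\<in>Hd. \<forall>q\<in>Hd. compatible p q \<longrightarrow> (\<forall>x. rel M p x \<and> rel M q x \<longrightarrow> rel M (p \<inter> q) x)) \<and>
     (\<forall>p\<in>Hd. \<forall>q\<in>Hd. \<forall>x. rel M p x \<longrightarrow> rel M (sasaki p q) (pi_fun M q x)) \<and>
     (\<forall>p\<in>Hd. \<forall>q\<in>Hd. p \<subseteq> q \<longrightarrow>
        (\<forall>x. rel M bot_sp (pi_fun M p (pi_fun M q x)) \<longrightarrow> rel M bot_sp (pi_fun M p x))) \<and>
     (\<forall>q\<in>Hd. \<forall>x. rel M bot_sp (pi_fun M q x) \<longrightarrow> rel M (orth q) x) \<and>
     (\<forall>p\<in>Hd. \<forall>U\<in>Ud. \<forall>x. rel M p x \<longrightarrow> rel M (app_op U p) (u_fun M U x)) \<and>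
     (\<forall>p\<in>Hd. \<forall>U\<in>Ud. \<forall>x. rel M p (u_fun M U x) \<longrightarrow> rel M (app_op (matrix_inv U) p) x)"

definition strong_morphism :: "('m, 'n::finite) lstruct \<Rightarrow> ('m \<Rightarrow> (complex^'n) set) \<Rightarrow> bool" where
  "strong_morphism M \<kappa> \<longleftrightarrow>
     (\<forall>m. \<kappa> m \<in> Hd) \<and>
     (\<forall>m. \<forall>p\<in>Hd. rel M p m \<longleftrightarrow> \<kappa> m \<subseteq> p) \<and>
     (\<forall>m. \<forall>q\<in>Hd. \<kappa> (pi_fun M q m) = sasaki (\<kappa> m) q) \<and>
     (\<forall>m. \<forall>U\<in>Ud. \<kappa> (u_fun M U m) = app_op U (\<kappa> m))"

end

theory Submission
  imports Defs
begin


lemma cinner_add_right: "cinner v (w1 + w2) = cinner v w1 + cinner v w2"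
  by (simp add: cinner_def algebra_simps sum.distrib)
lemma cinner_add_left: "cinner (v1 + v2) w = cinner v1 w + cinner v2 w"
  by (simp add: cinner_def algebra_simps sum.distrib)
lemma cinner_scale_right: "cinner v (c *s w) = c * cinner v w"
  by (simp add: cinner_def sum_distrib_left algebra_simps)
lemma cinner_scale_left: "cinner (c *s v) w = cnj c * cinner v w"
  by (simp add: cinner_def sum_distrib_left algebra_simps)
lemma cinner_zero_left[simp]: "cinner 0 w = 0" by (simp add: cinner_def)
lemma cinner_zero_right[simp]: "cinner w 0 = 0" by (simp add: cinner_def)
lemma cinner_minus_right: "cinner v (- w) = - cinner v w"
  by (simp add: cinner_def sum_negf)
lemma cinner_diff_right: "cinner v (w1 - w2) = cinner v w1 - cinner v w2"
  by (simp add: cinner_def algebra_simps sum_subtractf)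
lemma cinner_diff_left: "cinner (v1 - v2) w = cinner v1 w - cinner v2 w"
  by (simp add: cinner_def algebra_simps sum_subtractf)
lemma cinner_commute: "cinner w v = cnj (cinner v w)"
  by (simp add: cinner_def mult.commute)
lemma cinner_re: "Re (cinner v w) = v \<bullet> w"
  by (simp add: cinner_def inner_vec_def inner_complex_def Re_sum)
lemma cinner_self_eq0: "cinner v v = 0 \<longleftrightarrow> v = 0"
proof
  assume "cinner v v = 0"
  then have "v \<bullet> v = 0" using cinner_re[of v v] by simp
  then show "v = 0" by simp
qed simp
lemma cinner_self_real: "cinner v v = of_real ((norm v)^2)"
proof -
  have "Im (cinner v v) = 0" by (simp add: cinner_def Im_sum)
  moreover have "Re (cinner v v) = (norm v)^2" using cinner_re by (simp add: power2_norm_eq_inner)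
  ultimately show ?thesis by (simp add: complex_eq_iff)
qed

lemma scaleR_vec_conv: "r *\<^sub>R (v::complex^'n) = (of_real r :: complex) *s v"
proof (rule iffD2[OF vec_eq_iff], rule allI)
  fix i
  have "(r *\<^sub>R v)$i = r *\<^sub>R (v$i)" by (rule vector_scaleR_component)
  also have "\<dots> = (of_real r :: complex) * v$i" by (rule scaleR_conv_of_real)
  also have "\<dots> = ((of_real r :: complex) *s v)$i" by (rule vector_smult_component[symmetric])
  finally show "(r *\<^sub>R v)$i = ((of_real r :: complex) *s v)$i" .
qed

lemma csubspace_subspace: "csubspace S \<Longrightarrow> subspace S"
  unfolding csubspace_def subspace_def by (simp add: scaleR_vec_conv)

lemma csubspace_diff: "csubspace S \<Longrightarrow> x \<in> S \<Longrightarrow> y \<in> S \<Longrightarrow> x - y \<in> S"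
  by (simp add: csubspace_subspace subspace_diff)

lemma orth_csubspace: "csubspace (orth S)"
  unfolding csubspace_def orth_def by (simp add: cinner_add_right cinner_scale_right)

lemma orth_eq: assumes "csubspace S" shows "orth S = orthogonal_comp S"
proof
  show "orth S \<subseteq> orthogonal_comp S"
    by (auto simp: orth_def orthogonal_comp_def orthogonal_def cinner_re[symmetric])
  show "orthogonal_comp S \<subseteq> orth S"
  proof
    fix v assume v: "v \<in> orthogonal_comp S"
    show "v \<in> orth S" unfolding orth_def
    proof (intro CollectI ballI)
      fix w assume w: "w \<in> S"
      then have "(\<i> *s w) \<in> S" using assms by (simp add: csubspace_def)
      then have "Re (cinner (\<i> *s w) v) = 0" using v by (simp add: orthogonal_comp_def orthogonal_def cinner_re)
      moreover have "Re (cinner w v) = 0" using v w by (simp add: orthogonal_comp_def orthogonal_def cinner_re)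
      ultimately show "cinner w v = 0" by (simp add: cinner_scale_left complex_eq_iff)
    qed
  qed
qed

lemma orth_orth: assumes "csubspace S" shows "orth (orth S) = S"
proof -
  have "orth (orth S) = orthogonal_comp (orthogonal_comp S)"
    using orth_eq[OF assms] orth_eq[OF orth_csubspace[of S]] by simp
  then show ?thesis using orthogonal_comp_self[OF csubspace_subspace[OF assms]] by simp
qed

lemma orth_decomp: assumes "csubspace S"
  obtains a b where "a \<in> S" "b \<in> orth S" "v = a + b"
proof -
  have "v \<in> S + orthogonal_comp S"
    using subspace_sum_orthogonal_comp[OF csubspace_subspace[OF assms]] by auto
  then show ?thesis using that orth_eq[OF assms] by (auto elim!: set_plus_elim)
qed

lemma orth_int0: "x \<in> S \<Longrightarrow> x \<in> orth S \<Longrightarrow> x = 0"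
  by (auto simp: orth_def cinner_self_eq0)

lemma orth_anti: "A \<subseteq> B \<Longrightarrow> orth B \<subseteq> orth A"
  by (auto simp: orth_def)

lemma mem_orth_sym: "x \<in> orth S \<Longrightarrow> y \<in> S \<Longrightarrow> cinner x y = 0"
  by (auto simp: orth_def) (metis cinner_commute complex_cnj_zero)


definition lsp :: "complex^'n \<Rightarrow> (complex^'n) set" where
  "lsp v = range (\<lambda>c. c *s v)"

lemma Hd_iff: "p \<in> Hd \<longleftrightarrow> csubspace p" by (simp add: Hd_def)

lemma csub_0: "csubspace S \<Longrightarrow> 0 \<in> S" by (simp add: csubspace_def)
lemma csub_add: "csubspace S \<Longrightarrow> x \<in> S \<Longrightarrow> y \<in> S \<Longrightarrow> x + y \<in> S" by (simp add: csubspace_def)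
lemma csub_scale: "csubspace S \<Longrightarrow> x \<in> S \<Longrightarrow> c *s x \<in> S" by (simp add: csubspace_def)

lemma ssumI: "a \<in> A \<Longrightarrow> b \<in> B \<Longrightarrow> a + b \<in> ssum A B"
  unfolding ssum_def by blast
lemma ssumE: "x \<in> ssum A B \<Longrightarrow> (\<And>a b. a \<in> A \<Longrightarrow> b \<in> B \<Longrightarrow> x = a + b \<Longrightarrow> P) \<Longrightarrow> P"
  unfolding ssum_def by blast

lemma csub_inter: "csubspace p \<Longrightarrow> csubspace q \<Longrightarrow> csubspace (p \<inter> q)"
  by (simp add: csubspace_def)
lemma csub_UNIV: "csubspace UNIV" by (simp add: csubspace_def)
lemma csub_zero: "csubspace {0}" by (simp add: csubspace_def)

lemma csub_ssum: assumes "csubspace p" "csubspace q" shows "csubspace (ssum p q)"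
  unfolding csubspace_def ssum_def
proof (intro conjI ballI allI)
  show "0 \<in> {a + b |a b. a \<in> p \<and> b \<in> q}" using assms ssumI[of 0 p 0 q] by (simp add: csub_0 ssum_def)
next
  fix x y assume "x \<in> {a + b |a b. a \<in> p \<and> b \<in> q}" "y \<in> {a + b |a b. a \<in> p \<and> b \<in> q}"
  then obtain a b a' b' where "x = a + b" "y = a' + b'" "a \<in> p" "b \<in> q" "a' \<in> p" "b' \<in> q" by auto
  then show "x + y \<in> {a + b |a b. a \<in> p \<and> b \<in> q}"
  proof -
    have "x + y = (a + a') + (b + b')" using \<open>x = a + b\<close> \<open>y = a' + b'\<close> by (simp add: algebra_simps)
    moreover have "a + a' \<in> p" "b + b' \<in> q" using assms \<open>a \<in> p\<close> \<open>a' \<in> p\<close> \<open>b \<in> q\<close> \<open>b' \<in> q\<close> by (auto simp: csub_add)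
    ultimately show ?thesis by blast
  qed
next
  fix c x assume "x \<in> {a + b |a b. a \<in> p \<and> b \<in> q}"
  then obtain a b where "x = a + b" "a \<in> p" "b \<in> q" by auto
  then show "c *s x \<in> {a + b |a b. a \<in> p \<and> b \<in> q}"
  proof -
    have "c *s x = c *s a + c *s b" using \<open>x = a + b\<close> by (simp add: vector_add_ldistrib)
    moreover have "c *s a \<in> p" "c *s b \<in> q" using assms \<open>a \<in> p\<close> \<open>b \<in> q\<close> by (auto simp: csub_scale)
    ultimately show ?thesis by blast
  qed
qed

lemma csub_sasaki: "csubspace p \<Longrightarrow> csubspace q \<Longrightarrow> csubspace (sasaki p q)"
  by (simp add: sasaki_def csub_inter csub_ssum orth_csubspace)

lemma csub_lsp: "csubspace (lsp v)"
  unfolding csubspace_def lsp_def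
proof (intro conjI ballI allI)
  show "0 \<in> range (\<lambda>c. c *s v)" using vector_smult_lzero[of v] by (metis rangeI)
next
  fix x y assume "x \<in> range (\<lambda>c. c *s v)" "y \<in> range (\<lambda>c. c *s v)"
  then obtain a b where "x = a *s v" "y = b *s v" by blast
  then have "x + y = (a + b) *s v" by (simp add: vector_sadd_rdistrib)
  then show "x + y \<in> range (\<lambda>c. c *s v)" by (metis rangeI)
next
  fix c x assume "x \<in> range (\<lambda>c. c *s v)"
  then obtain a where "x = a *s v" by blast
  then have "c *s x = (c * a) *s v" by (simp add: vector_smult_assoc)
  then show "c *s x \<in> range (\<lambda>c. c *s v)" by (metis rangeI)
qed

lemma lsp_self: "v \<in> lsp v" unfolding lsp_def by (metis rangeI vector_smult_lid)
lemma lsp_scale: "c *s v \<in> lsp v" unfolding lsp_def by (rule rangeI)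
lemma lsp_sub: "csubspace S \<Longrightarrow> v \<in> S \<Longrightarrow> lsp v \<subseteq> S"
  unfolding lsp_def by (auto simp: csub_scale)

lemma ssum_sub: "csubspace S \<Longrightarrow> A \<subseteq> S \<Longrightarrow> B \<subseteq> S \<Longrightarrow> ssum A B \<subseteq> S"
proof
  fix x assume "csubspace S" "A \<subseteq> S" "B \<subseteq> S" "x \<in> ssum A B"
  then show "x \<in> S" by (metis csub_add ssumE subsetD)
qed

lemma ssum_self: "csubspace S \<Longrightarrow> ssum S S = S"
  apply (rule antisym)
   apply (simp add: ssum_sub)
  by (metis add.right_neutral csub_0 ssumI subsetI)

lemma ssum_mono: "A \<subseteq> A' \<Longrightarrow> B \<subseteq> B' \<Longrightarrow> ssum A B \<subseteq> ssum A' B'"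
  unfolding ssum_def by blast

lemma sasaki_mono: "p \<subseteq> p' \<Longrightarrow> sasaki p q \<subseteq> sasaki p' q"
  unfolding sasaki_def using ssum_mono by blast

lemma orth_single_lsp: "orth {v} = orth (lsp v)"
proof
  show "orth {v} \<subseteq> orth (lsp v)" unfolding orth_def lsp_def by (auto simp: cinner_scale_left)
  show "orth (lsp v) \<subseteq> orth {v}" using lsp_self[of v] unfolding orth_def by blast
qed

lemma orth_orth_single: "orth (orth {v}) = lsp v"
  by (simp add: orth_single_lsp orth_orth csub_lsp)

lemma compat_CL0: assumes "csubspace p" "csubspace q" "orth q \<subseteq> p" shows "compatible p q"
  unfolding compatible_def
proof (rule antisym)
  show "p \<subseteq> ssum (p \<inter> q) (p \<inter> orth q)"
  proof
    fix v assume v: "v \<in> p"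
    obtain a b where ab: "a \<in> q" "b \<in> orth q" "v = a + b" using orth_decomp[OF assms(2)] by blast
    have "b \<in> p" using ab assms(3) by auto
    then have "a \<in> p" using csubspace_diff[OF assms(1) v \<open>b \<in> p\<close>] ab by simp
    then show "v \<in> ssum (p \<inter> q) (p \<inter> orth q)" unfolding ssum_def using ab \<open>b \<in> p\<close> by blast
  qed
  show "ssum (p \<inter> q) (p \<inter> orth q) \<subseteq> p" using assms(1) by (intro ssum_sub) auto
qed

lemma compat_CL1: assumes "csubspace p" "csubspace q" "p \<subseteq> orth q" shows "compatible p q"
  unfolding compatible_def
proof (rule antisym)
  show "p \<subseteq> ssum (p \<inter> q) (p \<inter> orth q)"
  proof
    fix v assume v: "v \<in> p"
    have "v = 0 + v" by simp
    then show "v \<in> ssum (p \<inter> q) (p \<inter> orth q)"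
      using v assms ssumI[of 0 "p \<inter> q" v "p \<inter> orth q"] by (auto simp: csub_0)
  qed
  show "ssum (p \<inter> q) (p \<inter> orth q) \<subseteq> p" using assms(1) by (intro ssum_sub) auto
qed

lemma sasaki_zero_iff: assumes "csubspace k" "csubspace p"
  shows "sasaki k p \<subseteq> {0} \<longleftrightarrow> k \<subseteq> orth p"
proof
  assume h: "sasaki k p \<subseteq> {0}"
  show "k \<subseteq> orth p"
  proof
    fix v assume v: "v \<in> k"
    obtain a b where ab: "a \<in> p" "b \<in> orth p" "v = a + b" using orth_decomp[OF assms(2)] by blast
    have "- b \<in> orth p" using ab orth_csubspace
      by (metis csubspace_diff diff_0 csub_0)
    then have "a \<in> ssum (orth p) k" unfolding ssum_def using ab v
      by (intro CollectI exI[of _ "-b"] exI[of _ v]) auto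
    then have "a \<in> sasaki k p" using ab by (simp add: sasaki_def)
    then have "a = 0" using h by auto
    then show "v \<in> orth p" using ab by simp
  qed
next
  assume h: "k \<subseteq> orth p"
  show "sasaki k p \<subseteq> {0}"
  proof
    fix x assume "x \<in> sasaki k p"
    then have "x \<in> p" "x \<in> ssum (orth p) k" by (auto simp: sasaki_def)
    then have "x \<in> orth p" using ssum_sub[OF orth_csubspace[of p] subset_refl h] by auto
    then show "x \<in> {0}" using orth_int0 \<open>x \<in> p\<close> by auto
  qed
qed

lemma sasaki_top: assumes "csubspace r" shows "sasaki UNIV r = r"
proof -
  have "ssum (orth r) UNIV = UNIV" using orth_csubspace[of r] ssumI[of 0 "orth r" _ UNIV]
    by (auto simp: csub_0)
  then show ?thesis by (simp add: sasaki_def)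
qed

lemma matrix_scale_comm: "(U::complex^'n^'m) *v (c *s x) = c *s (U *v x)"
  by (simp add: vec_eq_iff matrix_vector_mult_def sum_distrib_left algebra_simps)



lemma csub_app_op: assumes "csubspace p" shows "csubspace (app_op U p)"
  unfolding csubspace_def app_op_def
proof (intro conjI ballI allI)
  show "0 \<in> (*v) U ` p" using assms csub_0 by (metis image_eqI matrix_vector_mult_0_right)
next
  fix x y assume "x \<in> (*v) U ` p" "y \<in> (*v) U ` p"
  then obtain x' y' where "x = U *v x'" "y = U *v y'" "x' \<in> p" "y' \<in> p" by auto
  then have "x + y = U *v (x' + y')" "x' + y' \<in> p" using assms
    by (auto simp: matrix_vector_right_distrib csub_add)
  then show "x + y \<in> (*v) U ` p" by blast
next
  fix c x assume "x \<in> (*v) U ` p"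
  then obtain x' where "x = U *v x'" "x' \<in> p" by auto
  then have "c *s x = U *v (c *s x')" "c *s x' \<in> p" using assms
    by (auto simp: matrix_scale_comm csub_scale)
  then show "c *s x \<in> (*v) U ` p" by blast
qed


lemma orth_zero: "orth {0} = UNIV" by (simp add: orth_def)
lemma orth_UNIV: "orth UNIV = {0}"
  using orth_int0[of _ UNIV] orth_csubspace[of UNIV] csub_0 by blast

locale pqm_loc =
  fixes M :: "('m, 'n::finite) lstruct"
  assumes pqm: "PQM_model M"
begin

lemma pqm_unf: "(\<exists>x. \<not> rel M bot_sp x) \<and> (\<forall>x. rel M top_sp x) \<and> (\<forall>p\<in>Hd. \<forall>q\<in>Hd. p \<subseteq> q \<longrightarrow> (\<forall>x. rel M p x \<longrightarrow> rel M q x)) \<and> (\<forall>p\<in>Hd. \<forall>q\<in>Hd. compatible p q \<longrightarrow> (\<forall>x. rel M p x \<and> rel M q x \<longrightarrow> rel M (p \<inter> q) x)) \<and> (\<forall>p\<in>Hd. \<forall>q\<in>Hd. \<forall>x. rel M p x \<longrightarrow> rel M (sasaki p q) (pi_fun M q x)) \<and> (\<forall>p\<in>Hd. \<forall>q\<in>Hd. p \<subseteq> q \<longrightarrow> (\<forall>x. rel M bot_sp (pi_fun M p (pi_fun M q x)) \<longrightarrow> rel M bot_sp (pi_fun M p x))) \<and> (\<forall>q\<in>Hd. \<forall>x. rel M bot_sp (pi_fun M q x) \<longrightarrow> rel M (orth q) x) \<and> (\<forall>p\<in>Hd. \<forall>U\<in>Ud. \<forall>x. rel M p x \<longrightarrow>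 rel M (app_op U p) (u_fun M U x)) \<and> (\<forall>p\<in>Hd. \<forall>U\<in>Ud. \<forall>x. rel M p (u_fun M U x) \<longrightarrow> rel M (app_op (matrix_inv U) p) x)" using pqm unfolding PQM_model_def .

lemma pqm_part1: "\<exists>x. \<not> rel M bot_sp x"
  by (rule pqm_unf[THEN conjunct1])
lemma pqm_part2: "\<forall>x. rel M top_sp x"
  by (rule pqm_unf[THEN conjunct2, THEN conjunct1])
lemma pqm_part3: "\<forall>p\<in>Hd. \<forall>q\<in>Hd. p \<subseteq> q \<longrightarrow> (\<forall>x. rel M p x \<longrightarrow> rel M q x)"
  by (rule pqm_unf[THEN conjunct2, THEN conjunct2, THEN conjunct1])
lemma pqm_part4: "\<forall>p\<in>Hd. \<forall>q\<in>Hd. compatible p q \<longrightarrow> (\<forall>x. rel M p x \<and> rel M q x \<longrightarrow> rel M (p \<inter> q) x)"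
  by (rule pqm_unf[THEN conjunct2, THEN conjunct2, THEN conjunct2, THEN conjunct1])
lemma pqm_part5: "\<forall>p\<in>Hd. \<forall>q\<in>Hd. \<forall>x. rel M p x \<longrightarrow> rel M (sasaki p q) (pi_fun M q x)"
  by (rule pqm_unf[THEN conjunct2, THEN conjunct2, THEN conjunct2, THEN conjunct2, THEN conjunct1])
lemma pqm_part6: "\<forall>p\<in>Hd. \<forall>q\<in>Hd. p \<subseteq> q \<longrightarrow> (\<forall>x. rel M bot_sp (pi_fun M p (pi_fun M q x)) \<longrightarrow> rel M bot_sp (pi_fun M p x))"
  by (rule pqm_unf[THEN conjunct2, THEN conjunct2, THEN conjunct2, THEN conjunct2, THEN conjunct2, THEN conjunct1])
lemma pqm_part7: "\<forall>q\<in>Hd. \<forall>x. rel M bot_sp (pi_fun M q x) \<longrightarrow> rel M (orth q) x"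
  by (rule pqm_unf[THEN conjunct2, THEN conjunct2, THEN conjunct2, THEN conjunct2, THEN conjunct2, THEN conjunct2, THEN conjunct1])
lemma pqm_part8: "\<forall>p\<in>Hd. \<forall>U\<in>Ud. \<forall>x. rel M p x \<longrightarrow> rel M (app_op U p) (u_fun M U x)"
  by (rule pqm_unf[THEN conjunct2, THEN conjunct2, THEN conjunct2, THEN conjunct2, THEN conjunct2, THEN conjunct2, THEN conjunct2, THEN conjunct1])
lemma pqm_part9: "\<forall>p\<in>Hd. \<forall>U\<in>Ud. \<forall>x. rel M p (u_fun M U x) \<longrightarrow> rel M (app_op (matrix_inv U) p) x"
  by (rule pqm_unf[THEN conjunct2, THEN conjunct2, THEN conjunct2, THEN conjunct2, THEN conjunct2, THEN conjunct2, THEN conjunct2, THEN conjunct2])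

lemma ax_top: "rel M UNIV x" using pqm_part2 by (simp add: top_sp_def)
lemma ax_nbot: "\<exists>x. \<not> rel M {0} x" using pqm_part1 by (simp add: bot_sp_def)
lemma ax_up: assumes "csubspace p" "csubspace q" "p \<subseteq> q" "rel M p x" shows "rel M q x"
proof -
  have "p \<in> Hd" "q \<in> Hd" using assms by (simp_all add: Hd_iff)
  then show ?thesis using pqm_part3[rule_format, of p q x] assms(3,4) by simp
qed
lemma ax_meet: assumes "csubspace p" "csubspace q" "compatible p q" "rel M p x" "rel M q x" shows "rel M (p \<inter> q) x"
proof -
  have "p \<in> Hd" "q \<in> Hd" using assms by (simp_all add: Hd_iff)
  then show ?thesis using pqm_part4[rule_format, of p q x] assms(3,4,5) by simp
qed
lemma ax_pii: assumes "csubspace p" "csubspace q" "rel M p x" shows "rel M (sasaki p q) (pi_fun M q x)"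
proof -
  have "p \<in> Hd" "q \<in> Hd" using assms by (simp_all add: Hd_iff)
  then show ?thesis using pqm_part5[rule_format, of p q x] assms(3) by simp
qed
lemma ax_pic: assumes "csubspace p" "csubspace q" "p \<subseteq> q" "rel M {0} (pi_fun M p (pi_fun M q x))" shows "rel M {0} (pi_fun M p x)"
proof -
  have "p \<in> Hd" "q \<in> Hd" using assms by (simp_all add: Hd_iff)
  then show ?thesis using pqm_part6[rule_format, of p q x] assms(3,4) unfolding bot_sp_def by simp
qed
lemma ax_pibot: assumes "csubspace q" "rel M {0} (pi_fun M q x)" shows "rel M (orth q) x"
proof -
  have "q \<in> Hd" using assms by (simp_all add: Hd_iff)
  then show ?thesis using pqm_part7[rule_format, of q x] assms(2) unfolding bot_sp_def by simp
qed
lemma ax_ui: assumes "csubspace p" "U \<in> Ud" "rel M p x" shows "rel M (app_op U p) (u_fun M U x)"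
proof -
  have "p \<in> Hd" using assms by (simp_all add: Hd_iff)
  then show ?thesis using pqm_part8[rule_format, of p U x] assms(2,3) by simp
qed
lemma ax_ue: assumes "csubspace p" "U \<in> Ud" "rel M p (u_fun M U x)" shows "rel M (app_op (matrix_inv U) p) x"
proof -
  have "p \<in> Hd" using assms by (simp_all add: Hd_iff)
  then show ?thesis using pqm_part9[rule_format, of p U x] assms(2,3) by simp
qed

lemma transferD: assumes "csubspace s" "csubspace r" "s \<subseteq> r" "rel M (orth s) (pi_fun M r x)"
  shows "rel M (orth s) x"
proof -
  have "sasaki (orth s) s = s \<inter> orth s"
    using ssum_self[OF orth_csubspace[of s]] by (simp add: sasaki_def)
  also have "\<dots> = {0}"
    using orth_int0[of _ s] csub_0[OF assms(1)] csub_0[OF orth_csubspace[of s]] by blast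
  finally have "sasaki (orth s) s = {0}" .
  then have "rel M {0} (pi_fun M s (pi_fun M r x))"
    using ax_pii[OF orth_csubspace assms(1) assms(4)] by simp
  then have "rel M {0} (pi_fun M s x)" using ax_pic assms by blast
  then show ?thesis using ax_pibot assms by blast
qed

lemma H_aux: "dim (orth p) = N \<Longrightarrow> csubspace p \<Longrightarrow> (\<forall>v\<in>orth p. rel M (orth {v}) x) \<Longrightarrow> rel M p x"
proof (induction N arbitrary: p rule: less_induct)
  case (less N p)
  show ?case
  proof (cases "orth p \<subseteq> {0}")
    case True
    then have "orth p = {0}" using csub_0[OF orth_csubspace[of p]] by auto
    then have "p = UNIV" using orth_orth[OF less.prems(2)] orth_zero by metis
    then show ?thesis using ax_top by simp
  next
    case False
    then obtain v where v: "v \<in> orth p" "v \<noteq> 0" by auto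
    define p1 where "p1 = ssum p (lsp v)"
    have cp1: "csubspace p1" unfolding p1_def by (simp add: csub_ssum less.prems csub_lsp)
    have pp1: "p \<subseteq> p1" unfolding p1_def using ssumI[of _ p 0 "lsp v"] csub_0[OF csub_lsp[of v]] by auto
    have vp1: "v \<in> p1" unfolding p1_def using ssumI[of 0 p v "lsp v"] csub_0[OF less.prems(2)] lsp_self by auto
    have sub: "orth p1 \<subseteq> orth p" using orth_anti[OF pp1] .
    have "v \<notin> orth p1" using vp1 v(2) orth_int0 by blast
    then have "orth p1 \<subset> orth p" using sub v(1) by blast
    moreover have e1: "span (orth p1) = orth p1" using csubspace_subspace[OF orth_csubspace[of p1]] by (simp add: span_eq_iff)
    moreover have e2: "span (orth p) = orth p" using csubspace_subspace[OF orth_csubspace[of p]] by (simp add: span_eq_iff)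
    ultimately have "span (orth p1) \<subset> span (orth p)" by (simp only: e1 e2)
    then have "dim (orth p1) < dim (orth p)" by (rule dim_psubset)
    then have "dim (orth p1) < N" using less.prems(1) by simp
    moreover have "\<forall>v\<in>orth p1. rel M (orth {v}) x" using less.prems(3) sub by blast
    ultimately have r1: "rel M p1 x" using less.IH[OF _ refl cp1] by blast
    have r2: "rel M (orth {v}) x" using less.prems(3) v(1) by blast
    have cmp: "compatible p1 (orth {v})"
      by (rule compat_CL0[OF cp1 orth_csubspace]) (simp add: orth_orth_single p1_def lsp_sub cp1 vp1 flip: p1_def)
    have r3: "rel M (p1 \<inter> orth {v}) x" using ax_meet[OF cp1 orth_csubspace cmp r1 r2] .
    have "p1 \<inter> orth {v} \<subseteq> p"
    proof
      fix z assume z: "z \<in> p1 \<inter> orth {v}"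
      then obtain a b where ab: "a \<in> p" "b \<in> lsp v" "z = a + b" unfolding p1_def by (auto elim: ssumE)
      obtain c where c: "b = c *s v" using ab(2) unfolding lsp_def by auto
      have "cinner v z = 0" using z by (simp add: orth_def)
      moreover have "cinner v a = 0" using mem_orth_sym[OF v(1) ab(1)] .
      ultimately have "c * cinner v v = 0" using ab c by (simp add: cinner_add_right cinner_scale_right)
      then have "c = 0" using v(2) cinner_self_eq0 by auto
      then show "z \<in> p" using ab c by simp
    qed
    then show ?thesis using ax_up[OF csub_inter[OF cp1 orth_csubspace] less.prems(2) _ r3] by blast
  qed
qed

lemma H_rel: "csubspace p \<Longrightarrow> (\<forall>v\<in>orth p. rel M (orth {v}) x) \<Longrightarrow> rel M p x"
  using H_aux by blast

lemma H_conv: assumes "csubspace p" "rel M p x" "v \<in> orth p" shows "rel M (orth {v}) x"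
proof -
  have "p \<subseteq> orth {v}"
  proof
    fix w assume "w \<in> p"
    then have "cinner v w = 0" using mem_orth_sym[OF assms(3)] by blast
    then show "w \<in> orth {v}" unfolding orth_def by simp
  qed
  then show ?thesis using ax_up[OF assms(1) orth_csubspace _ assms(2)] by blast
qed

lemma Z_scale: assumes "rel M (orth {v}) x" shows "rel M (orth {c *s v}) x"
proof -
  have "orth {v} \<subseteq> orth {c *s v}"
  proof
    fix w assume "w \<in> orth {v}"
    then have "cinner v w = 0" unfolding orth_def by simp
    then have "cinner (c *s v) w = 0" by (simp add: cinner_scale_left)
    then show "w \<in> orth {c *s v}" unfolding orth_def by simp
  qed
  then show ?thesis using ax_up[OF orth_csubspace orth_csubspace _ assms] by blast
qed

end


lemma lagrange: "cross3 (a::real^3) b \<bullet> cross3 c d = (a \<bullet> c) * (b \<bullet> d) - (a \<bullet> d) * (b \<bullet> c)"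
  by (simp add: cross3_simps)
lemma bac: "cross3 (x::real^3) (cross3 a b) = (x \<bullet> b) *\<^sub>R a - (x \<bullet> a) *\<^sub>R b"
proof (rule iffD2[OF vec_eq_iff], rule allI)
  fix i :: 3
  show "cross3 x (cross3 a b) $ i = ((x \<bullet> b) *\<^sub>R a - (x \<bullet> a) *\<^sub>R b) $ i"
    using exhaust_3[of i] by (auto simp: cross3_def inner_vec_def sum_3 algebra_simps)
qed
lemma cross_dot1: "(cross3 a b) \<bullet> a = 0" using dot_cross_self by (simp add: inner_commute)
lemma cross_dot2: "(cross3 a b) \<bullet> b = 0" using dot_cross_self by simp

lemma cross_zero_par: assumes "cross3 x m = 0" shows "(m \<bullet> m) *\<^sub>R x = (m \<bullet> x) *\<^sub>R m"
proof -
  have "cross3 m (cross3 x m) = (m \<bullet> m) *\<^sub>R x - (m \<bullet> x) *\<^sub>R m" by (rule bac)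
  then show ?thesis using assms by simp
qed

lemma RL: fixes a b p c :: "real^3"
  assumes "a \<bullet> p = 0" "b \<bullet> p = 0" "a \<bullet> c = 0" "b \<bullet> c = 0" "cross3 a b \<noteq> 0" "c \<noteq> 0"
  shows "\<exists>t. p = t *\<^sub>R c"
proof -
  define m where "m = cross3 a b"
  have "cross3 p m = 0" using bac[of p a b] assms by (simp add: m_def inner_commute)
  then have hp: "(m \<bullet> m) *\<^sub>R p = (m \<bullet> p) *\<^sub>R m" by (rule cross_zero_par)
  have "cross3 c m = 0" using bac[of c a b] assms by (simp add: m_def inner_commute)
  then have hc: "(m \<bullet> c) *\<^sub>R m = (m \<bullet> m) *\<^sub>R c" using cross_zero_par by metis
  have mm: "m \<bullet> m \<noteq> 0" using assms(5) by (simp add: m_def)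
  have "m \<bullet> c \<noteq> 0" using hc mm assms(6) by auto
  have "p = ((m \<bullet> p) / (m \<bullet> m)) *\<^sub>R m" using hp mm
    by (metis (no_types, lifting) divide_inverse_commute inverse_eq_divide scaleR_scaleR
        nonzero_divide_eq_eq eq_vector_fraction_iff)
  also have "m = ((m \<bullet> m) / (m \<bullet> c)) *\<^sub>R c" using hc \<open>m \<bullet> c \<noteq> 0\<close>
    by (metis eq_vector_fraction_iff)
  finally show ?thesis by (metis scaleR_scaleR)
qed

definition onb3 :: "complex^'n \<Rightarrow> complex^'n \<Rightarrow> complex^'n \<Rightarrow> bool" where
  "onb3 e1 e2 e3 \<longleftrightarrow> cinner e1 e1 = 1 \<and> cinner e2 e2 = 1 \<and> cinner e3 e3 = 1 \<and>
     cinner e1 e2 = 0 \<and> cinner e1 e3 = 0 \<and> cinner e2 e3 = 0"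

definition Emap :: "complex^'n \<Rightarrow> complex^'n \<Rightarrow> complex^'n \<Rightarrow> real^3 \<Rightarrow> complex^'n" where
  "Emap e1 e2 e3 v = (complex_of_real (v$1)) *s e1 + (complex_of_real (v$2)) *s e2 + (complex_of_real (v$3)) *s e3"

lemma Emap_add: "Emap e1 e2 e3 (v + w) = Emap e1 e2 e3 v + Emap e1 e2 e3 w"
  by (simp add: Emap_def vector_sadd_rdistrib algebra_simps)
lemma Emap_scale: "Emap e1 e2 e3 (t *\<^sub>R v) = complex_of_real t *s Emap e1 e2 e3 v"
  by (simp add: Emap_def vector_add_ldistrib vector_smult_assoc)
lemma Emap_zero: "Emap e1 e2 e3 0 = 0"
  by (simp add: Emap_def)

lemma Emap_inner: assumes "onb3 e1 e2 e3"
  shows "cinner (Emap e1 e2 e3 v) (Emap e1 e2 e3 w) = complex_of_real (v \<bullet> w)"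
proof -
  have o: "cinner e1 e1 = 1" "cinner e2 e2 = 1" "cinner e3 e3 = 1"
     "cinner e1 e2 = 0" "cinner e1 e3 = 0" "cinner e2 e3 = 0" using assms by (auto simp: onb3_def)
  then have o2: "cinner e2 e1 = 0" "cinner e3 e1 = 0" "cinner e3 e2 = 0"
    by (metis cinner_commute complex_cnj_zero)+
  show ?thesis
    by (simp add: Emap_def cinner_add_left cinner_add_right cinner_scale_left cinner_scale_right o o2
        inner_vec_def sum_3)
qed

definition Wsp :: "complex^'n \<Rightarrow> complex^'n \<Rightarrow> complex^'n \<Rightarrow> (complex^'n) set" where
  "Wsp e1 e2 e3 = {Emap e1 e2 e3 p + \<i> *s Emap e1 e2 e3 q | p q. True}"

lemma complex_split: "(c::complex) = complex_of_real (Re c) + \<i> * complex_of_real (Im c)"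
  by (simp add: complex_eq_iff)

lemma csub_W: "csubspace (Wsp e1 e2 e3)"
  unfolding csubspace_def Wsp_def
proof (intro conjI ballI allI)
  show "0 \<in> {Emap e1 e2 e3 p + \<i> *s Emap e1 e2 e3 q | p q. True}"
    by (rule CollectI, rule exI[of _ 0], rule exI[of _ 0]) (simp add: Emap_zero)
next
  fix x y assume "x \<in> {Emap e1 e2 e3 p + \<i> *s Emap e1 e2 e3 q | p q. True}"
     "y \<in> {Emap e1 e2 e3 p + \<i> *s Emap e1 e2 e3 q | p q. True}"
  then obtain p q p' q' where "x = Emap e1 e2 e3 p + \<i> *s Emap e1 e2 e3 q"
    "y = Emap e1 e2 e3 p' + \<i> *s Emap e1 e2 e3 q'" by blast
  then have "x + y = Emap e1 e2 e3 (p + p') + \<i> *s Emap e1 e2 e3 (q + q')"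
    by (simp add: Emap_add vector_add_ldistrib algebra_simps)
  then show "x + y \<in> {Emap e1 e2 e3 p + \<i> *s Emap e1 e2 e3 q | p q. True}" by blast
next
  fix c x assume "x \<in> {Emap e1 e2 e3 p + \<i> *s Emap e1 e2 e3 q | p q. True}"
  then obtain p q where x: "x = Emap e1 e2 e3 p + \<i> *s Emap e1 e2 e3 q" by blast
  define a where "a = Re c"
  define b where "b = Im c"
  have c: "c = complex_of_real a + \<i> * complex_of_real b" unfolding a_def b_def by (rule complex_split)
  have "c *s x = Emap e1 e2 e3 (a *\<^sub>R p - b *\<^sub>R q) + \<i> *s Emap e1 e2 e3 (b *\<^sub>R p + a *\<^sub>R q)"
  proof -
    have m: "Emap e1 e2 e3 (a *\<^sub>R p - b *\<^sub>R q) = Emap e1 e2 e3 (a *\<^sub>R p) + Emap e1 e2 e3 ((- b) *\<^sub>R q)"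
      using Emap_add[of e1 e2 e3 "a *\<^sub>R p" "(-b) *\<^sub>R q"] by simp
    show ?thesis
      unfolding x c m Emap_add Emap_scale
      by (simp add: vector_add_ldistrib vector_sadd_rdistrib vector_smult_assoc algebra_simps)
  qed
  then show "c *s x \<in> {Emap e1 e2 e3 p + \<i> *s Emap e1 e2 e3 q | p q. True}" by blast
qed

definition Lk :: "complex^'n \<Rightarrow> complex^'n \<Rightarrow> complex^'n \<Rightarrow> real^3 \<Rightarrow> (complex^'n) set" where
  "Lk e1 e2 e3 v = lsp (Emap e1 e2 e3 v)"

lemma Lk_sub_W: "Lk e1 e2 e3 v \<subseteq> Wsp e1 e2 e3"
proof
  fix x assume "x \<in> Lk e1 e2 e3 v"
  then obtain c where x: "x = c *s Emap e1 e2 e3 v" by (auto simp: Lk_def lsp_def)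
  have "x = Emap e1 e2 e3 (Re c *\<^sub>R v) + \<i> *s Emap e1 e2 e3 (Im c *\<^sub>R v)"
    unfolding x Emap_scale
    by (subst complex_split[of c]) (simp add: vector_sadd_rdistrib vector_smult_assoc)
  then show "x \<in> Wsp e1 e2 e3" unfolding Wsp_def by blast
qed

lemma lsp_scale_eq: "c \<noteq> 0 \<Longrightarrow> lsp (c *s v) = lsp v"
  unfolding lsp_def
  apply (auto simp: vector_smult_assoc)
  by (metis (no_types, lifting) mult.commute nonzero_eq_divide_eq rangeI vector_smult_assoc)

lemma Lk_scale: "t \<noteq> 0 \<Longrightarrow> Lk e1 e2 e3 (t *\<^sub>R v) = Lk e1 e2 e3 v"
  by (simp add: Lk_def Emap_scale lsp_scale_eq)


context pqm_loc begin
lemma bot_of_orth: assumes "csubspace p" "csubspace q" "p \<subseteq> orth q" "rel M p y" "rel M q y"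
  shows "rel M {0} y"
proof -
  have "rel M (p \<inter> q) y" using ax_meet[OF assms(1,2) compat_CL1[OF assms(1,2,3)] assms(4,5)] .
  moreover have "p \<inter> q \<subseteq> {0}" using assms(3) orth_int0 by blast
  ultimately show ?thesis using ax_up[OF csub_inter[OF assms(1,2)] csub_zero] by blast
qed
end

locale frame_loc = pqm_loc M for M :: "('m, 'n::finite) lstruct" +
  fixes e1 e2 e3 :: "complex^'n"
  assumes onb: "onb3 e1 e2 e3"
begin

abbreviation "E \<equiv> Emap e1 e2 e3"
abbreviation "L \<equiv> Lk e1 e2 e3"
abbreviation "W \<equiv> Wsp e1 e2 e3"

lemma EE: "cinner (E v) (E w) = complex_of_real (v \<bullet> w)" using Emap_inner[OF onb] .

lemma inner_EW: "cinner (E a) (E p + \<i> *s E q) = complex_of_real (a \<bullet> p) + \<i> * complex_of_real (a \<bullet> q)"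
  by (simp add: cinner_add_right cinner_scale_right EE)

lemma inner_EW0: assumes "cinner (E a) (E p + \<i> *s E q) = 0" shows "a \<bullet> p = 0" "a \<bullet> q = 0"
  using assms unfolding inner_EW by (simp_all add: complex_eq_iff)

lemma orth_pair: assumes "rel M (L l) y" "rel M (L k) y" "l \<bullet> k = 0" shows "rel M {0} y"
proof -
  have "L l \<subseteq> orth (L k)"
  proof
    fix x assume "x \<in> L l"
    then obtain c where x: "x = c *s E l" by (auto simp: Lk_def lsp_def)
    show "x \<in> orth (L k)" unfolding orth_def
    proof (intro CollectI ballI)
      fix z assume "z \<in> L k"
      then obtain d where z: "z = d *s E k" by (auto simp: Lk_def lsp_def)
      show "cinner z x = 0" using assms(3)
        by (simp add: x z cinner_scale_left cinner_scale_right EE inner_commute)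
    qed
  qed
  then show ?thesis using bot_of_orth[OF csub_lsp csub_lsp _ assms(1,2)[unfolded Lk_def]] by (simp add: Lk_def)
qed

lemma gadget:
  assumes hl: "rel M (L l) y" and hk: "rel M (L k) y"
    and cond: "(c \<bullet> l) * (c \<bullet> k) = (l \<bullet> k) * (c \<bullet> c)"
    and nl: "cross3 c l \<noteq> 0" and nk: "cross3 c k \<noteq> 0"
  shows "rel M (L c) y"
proof -
  define a where "a = cross3 c l"
  define b where "b = cross3 c k"
  have ab: "a \<bullet> b = 0" unfolding a_def b_def lagrange using cond
    by (simp add: inner_commute algebra_simps)
  define A where "A = orth {E a}"
  define B where "B = orth {E b}"
  have cA: "csubspace A" and cB: "csubspace B" by (simp_all add: A_def B_def orth_csubspace)
  have LA: "L l \<subseteq> A"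
  proof
    fix x assume "x \<in> L l"
    then obtain d where x: "x = d *s E l" by (auto simp: Lk_def lsp_def)
    have "a \<bullet> l = 0" unfolding a_def by (rule cross_dot2)
    then show "x \<in> A" by (simp add: A_def orth_def x cinner_scale_right EE)
  qed
  have LB: "L k \<subseteq> B"
  proof
    fix x assume "x \<in> L k"
    then obtain d where x: "x = d *s E k" by (auto simp: Lk_def lsp_def)
    have "b \<bullet> k = 0" unfolding b_def by (rule cross_dot2)
    then show "x \<in> B" by (simp add: B_def orth_def x cinner_scale_right EE)
  qed
  have rA: "rel M A y" using ax_up[OF csub_lsp cA _ hl[unfolded Lk_def]] LA by (simp add: Lk_def)
  have rB: "rel M B y" using ax_up[OF csub_lsp cB _ hk[unfolded Lk_def]] LB by (simp add: Lk_def)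
  have "orth B \<subseteq> A"
  proof
    fix x assume "x \<in> orth B"
    then have "x \<in> lsp (E b)" unfolding B_def orth_orth_single .
    then obtain d where x: "x = d *s E b" by (auto simp: lsp_def)
    show "x \<in> A" using ab by (simp add: A_def orth_def x cinner_scale_right EE)
  qed
  then have rAB: "rel M (A \<inter> B) y" using ax_meet[OF cA cB compat_CL0[OF cA cB] rA rB] by blast
  have cW: "csubspace W" by (rule csub_W)
  have rW: "rel M W y" using ax_up[OF csub_lsp cW _ hl[unfolded Lk_def]] Lk_sub_W[of e1 e2 e3 l]
    by (simp add: Lk_def)
  have "orth W \<subseteq> A \<inter> B"
  proof
    fix v assume v: "v \<in> orth W"
    have "E a \<in> W" unfolding Wsp_def
      by (rule CollectI, rule exI[of _ a], rule exI[of _ 0], simp add: Emap_zero)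
    have "E b \<in> W" unfolding Wsp_def
      by (rule CollectI, rule exI[of _ b], rule exI[of _ 0], simp add: Emap_zero)
    then have "cinner (E a) v = 0" "cinner (E b) v = 0" using v \<open>E a \<in> W\<close> by (auto simp: orth_def)
    then show "v \<in> A \<inter> B" by (simp add: A_def B_def orth_def)
  qed
  then have rABW: "rel M (A \<inter> B \<inter> W) y"
    using ax_meet[OF csub_inter[OF cA cB] cW compat_CL0[OF csub_inter[OF cA cB] cW] rAB rW] by blast
  have "A \<inter> B \<inter> W \<subseteq> L c"
  proof
    fix x assume x: "x \<in> A \<inter> B \<inter> W"
    then obtain p q where xpq: "x = E p + \<i> *s E q" unfolding Wsp_def by blast
    have "cinner (E a) x = 0" "cinner (E b) x = 0" using x by (auto simp: A_def B_def orth_def)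
    then have d: "a \<bullet> p = 0" "a \<bullet> q = 0" "b \<bullet> p = 0" "b \<bullet> q = 0"
      using inner_EW0 unfolding xpq by blast+
    have ac: "a \<bullet> c = 0" "b \<bullet> c = 0" unfolding a_def b_def by (simp_all add: cross_dot1)
    have "cross3 a b \<bullet> cross3 a b = (a \<bullet> a) * (b \<bullet> b)" using ab by (simp add: lagrange inner_commute)
    moreover have "a \<bullet> a \<noteq> 0" "b \<bullet> b \<noteq> 0" using nl nk by (simp_all add: a_def b_def)
    ultimately have nab: "cross3 a b \<noteq> 0" by auto
    have c0: "c \<noteq> 0" using nl by auto
    obtain s where s: "p = s *\<^sub>R c" using RL[OF d(1) d(3) ac nab c0] by blast
    obtain t where t: "q = t *\<^sub>R c" using RL[OF d(2) d(4) ac nab c0] by blast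
    have "x = (complex_of_real s + \<i> * complex_of_real t) *s E c"
      unfolding xpq s t Emap_scale by (simp add: vector_sadd_rdistrib vector_smult_assoc)
    then show "x \<in> L c" unfolding Lk_def by (simp only: lsp_scale)
  qed
  then show ?thesis
    using ax_up[OF csub_inter[OF csub_inter[OF cA cB] cW] csub_lsp _ rABW] by (simp add: Lk_def)
qed

end


context frame_loc begin

definition PR :: "'m \<Rightarrow> real \<Rightarrow> bool" where
  "PR y g \<longleftrightarrow> (\<exists>l k. rel M (L l) y \<and> rel M (L k) y \<and> l \<bullet> l = 1 \<and> k \<bullet> k = 1 \<and> l \<bullet> k = g)"

lemma PR_neg: "PR y g \<Longrightarrow> PR y (- g)"
proof -
  assume "PR y g"
  then obtain l k where h: "rel M (L l) y" "rel M (L k) y" "l \<bullet> l = 1" "k \<bullet> k = 1" "l \<bullet> k = g"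
    by (auto simp: PR_def)
  have "L (- k) = L k" using Lk_scale[of "-1" e1 e2 e3 k] by simp
  then show "PR y (- g)" unfolding PR_def using h
    by (intro exI[of _ l] exI[of _ "-k"]) simp
qed

lemma PR_zero: "PR y 0 \<Longrightarrow> rel M {0} y"
  unfolding PR_def using orth_pair by blast

lemma L_norm: assumes "t \<noteq> 0" "rel M (L c) y" shows "rel M (L (t *\<^sub>R c)) y"
  using assms Lk_scale[OF assms(1), of e1 e2 e3 c] by simp

lemma shrink:
  assumes g: "0 < g" "g < 1" and pr: "PR y g"
  shows "PR y ((3 * g - 1) / (1 + g))"
proof -
  obtain l k where h: "rel M (L l) y" "rel M (L k) y" and ll: "l \<bullet> l = 1" and kk: "k \<bullet> k = 1"
    and lk: "l \<bullet> k = g" using pr by (auto simp: PR_def)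
  have kl: "k \<bullet> l = g" using lk by (simp add: inner_commute)
  define n where "n = cross3 l k"
  have nl: "n \<bullet> l = 0" "l \<bullet> n = 0" unfolding n_def by (simp_all add: cross_dot1 dot_cross_self)
  have nk: "n \<bullet> k = 0" "k \<bullet> n = 0" unfolding n_def by (simp_all add: cross_dot2 dot_cross_self)
  have nn: "n \<bullet> n = 1 - g * g" unfolding n_def lagrange using ll kk lk kl by simp
  define r where "r = sqrt g"
  have rr: "r * r = g" unfolding r_def using g by simp
  define cp where "cp = r *\<^sub>R (l + k) + n"
  define cm where "cm = r *\<^sub>R (l + k) - n"
  have cpl: "cp \<bullet> l = r * (1 + g)" "cp \<bullet> k = r * (1 + g)"
    unfolding cp_def by (simp_all add: inner_add_left inner_scaleR_left ll kk lk kl nl nk algebra_simps)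
  have cml: "cm \<bullet> l = r * (1 + g)" "cm \<bullet> k = r * (1 + g)"
    unfolding cm_def by (simp_all add: inner_diff_left inner_add_left inner_scaleR_left ll kk lk kl nl nk algebra_simps)
  have cpp: "cp \<bullet> cp = (1 + g) * (1 + g)"
  proof -
    have "cp \<bullet> cp = r * r * (2 + 2 * g) + n \<bullet> n"
      unfolding cp_def by (simp add: inner_add_left inner_add_right inner_scaleR_left inner_scaleR_right
          ll kk lk kl nl nk algebra_simps)
    then show ?thesis using rr nn by (simp add: algebra_simps)
  qed
  have cmm: "cm \<bullet> cm = (1 + g) * (1 + g)"
  proof -
    have "cm \<bullet> cm = r * r * (2 + 2 * g) + n \<bullet> n"
      unfolding cm_def by (simp add: inner_diff_left inner_diff_right inner_add_left inner_add_right
          inner_scaleR_left inner_scaleR_right ll kk lk kl nl nk algebra_simps)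
    then show ?thesis using rr nn by (simp add: algebra_simps)
  qed
  have cpm: "cp \<bullet> cm = (1 + g) * (3 * g - 1)"
  proof -
    have "cp \<bullet> cm = r * r * (2 + 2 * g) - n \<bullet> n"
      unfolding cp_def cm_def by (simp add: inner_diff_left inner_diff_right inner_add_left inner_add_right
          inner_scaleR_left inner_scaleR_right ll kk lk kl nl nk algebra_simps)
    then show ?thesis using rr nn by (simp add: algebra_simps)
  qed
  have nz: "(1 + g) * (1 + g) - r * (1 + g) * (r * (1 + g)) \<noteq> 0"
  proof -
    have "(1 + g) * (1 + g) - r * (1 + g) * (r * (1 + g)) = (1 + g) * (1 + g) * (1 - g)"
      using rr by (simp add: algebra_simps)
    then show ?thesis using g by simp
  qed
  have rp: "rel M (L cp) y"
  proof (rule gadget[OF h])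
    show "(cp \<bullet> l) * (cp \<bullet> k) = (l \<bullet> k) * (cp \<bullet> cp)" using cpl cpp lk rr by (simp add: algebra_simps)
    show "cross3 cp l \<noteq> 0"
    proof
      assume "cross3 cp l = 0"
      then have "cross3 cp l \<bullet> cross3 cp l = 0" by simp
      then show False using nz unfolding lagrange by (simp add: cpl cpp ll inner_commute)
    qed
    show "cross3 cp k \<noteq> 0"
    proof
      assume "cross3 cp k = 0"
      then have "cross3 cp k \<bullet> cross3 cp k = 0" by simp
      then show False using nz unfolding lagrange by (simp add: cpl cpp kk inner_commute)
    qed
  qed
  have rm: "rel M (L cm) y"
  proof (rule gadget[OF h])
    show "(cm \<bullet> l) * (cm \<bullet> k) = (l \<bullet> k) * (cm \<bullet> cm)" using cml cmm lk rr by (simp add: algebra_simps)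
    show "cross3 cm l \<noteq> 0"
    proof
      assume "cross3 cm l = 0"
      then have "cross3 cm l \<bullet> cross3 cm l = 0" by simp
      then show False using nz unfolding lagrange by (simp add: cml cmm ll inner_commute)
    qed
    show "cross3 cm k \<noteq> 0"
    proof
      assume "cross3 cm k = 0"
      then have "cross3 cm k \<bullet> cross3 cm k = 0" by simp
      then show False using nz unfolding lagrange by (simp add: cml cmm kk inner_commute)
    qed
  qed
  define s where "s = 1 / (1 + g)"
  have s0: "s \<noteq> 0" using g by (simp add: s_def)
  show ?thesis unfolding PR_def
  proof (intro exI conjI)
    show "rel M (L (s *\<^sub>R cp)) y" using L_norm[OF s0 rp] .
    show "rel M (L (s *\<^sub>R cm)) y" using L_norm[OF s0 rm] .
    show "s *\<^sub>R cp \<bullet> s *\<^sub>R cp = 1" using cpp g by (simp add: s_def)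
    show "s *\<^sub>R cm \<bullet> s *\<^sub>R cm = 1" using cmm g by (simp add: s_def)
    have "s *\<^sub>R cp \<bullet> s *\<^sub>R cm = s * s * (cp \<bullet> cm)" by simp
    also have "\<dots> = (3 * g - 1) / (1 + g)"
    proof -
      have aux: "1 / a * (1 / a) * (a * x) = x / a" if "a \<noteq> 0" for a x :: real
        using that by (simp add: field_simps)
      show ?thesis unfolding cpm s_def by (rule aux) (use g in simp)
    qed
    finally show "s *\<^sub>R cp \<bullet> s *\<^sub>R cm = (3 * g - 1) / (1 + g)" .
  qed
qed

end


context frame_loc begin

lemma adjust:
  assumes g: "0 < g" "g < d" "d < 1" and pr: "PR y g"
  shows "PR y d"
proof -
  obtain l k where h: "rel M (L l) y" "rel M (L k) y" and ll: "l \<bullet> l = 1" and kk: "k \<bullet> k = 1"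
    and lk: "l \<bullet> k = g" using pr by (auto simp: PR_def)
  have kl: "k \<bullet> l = g" using lk by (simp add: inner_commute)
  define n where "n = cross3 l k"
  have nl: "n \<bullet> l = 0" "l \<bullet> n = 0" unfolding n_def by (simp_all add: cross_dot1 dot_cross_self)
  have nk: "n \<bullet> k = 0" "k \<bullet> n = 0" unfolding n_def by (simp_all add: cross_dot2 dot_cross_self)
  have nn: "n \<bullet> n = 1 - g * g" unfolding n_def lagrange using ll kk lk kl by simp
  have d0: "0 < d" using g by simp
  have "g * g < d * d" using mult_strict_mono[of g d g d] g by simp
  then have dg: "d * d - g * g > 0" by simp
  have "0 < d" using g by simp
  then have "d * d < d" using g by (simp add: mult_less_cancel_left1)
  then have d1: "1 - d * d > 0" using g by linarith
  have "g * g < g" using g by (simp add: mult_less_cancel_left1)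
  then have g1: "1 - g * g > 0" using g by linarith
  define t where "t = g * (1 - d * d) / (d * d - g * g)"
  have t0: "t > 0" unfolding t_def using g dg d1 by simp
  define v where "v = sqrt (t / g)"
  have vv: "v * v = t / g" unfolding v_def using t0 g by simp
  define c where "c = l + t *\<^sub>R k + v *\<^sub>R n"
  define A where "A = 1 + t * g"
  define B where "B = g + t"
  define N where "N = c \<bullet> c"
  have cl: "c \<bullet> l = A" unfolding c_def A_def
    by (simp add: inner_add_left inner_scaleR_left ll kl nl)
  have ck: "c \<bullet> k = B" unfolding c_def B_def
    by (simp add: inner_add_left inner_scaleR_left lk kk nk)
  have Nf: "N = 1 + t * t + 2 * t * g + v * v * (1 - g * g)" unfolding N_def c_def
    by (simp add: inner_add_left inner_add_right inner_scaleR_left inner_scaleR_right ll kk lk kl nl nk nn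
        algebra_simps)
  have "t * g > 0" using t0 g by simp
  then have A0: "A > 0" unfolding A_def by linarith
  have B0: "B > 0" unfolding B_def using t0 g by simp
  have F1: "g * N = A * B"
  proof -
    have "g * N = g + g * t * t + 2 * t * g * g + g * (v * v) * (1 - g * g)" unfolding Nf by (simp add: algebra_simps)
    also have "g * (v * v) = t" using vv g by simp
    finally show ?thesis unfolding A_def B_def by (simp add: algebra_simps)
  qed
  have F2: "A * g = d * d * B"
  proof -
    have "t * (d * d - g * g) = g * (1 - d * d)" unfolding t_def using dg by simp
    then show ?thesis unfolding A_def B_def by (simp add: algebra_simps)
  qed
  have "g * N > 0" using F1 A0 B0 by simp
  then have N0: "N > 0" using g by (simp add: zero_less_mult_iff)
  have e1': "g * (N - A * A) = A * (t * (1 - g * g))" using F1 unfolding A_def B_def by (simp add: algebra_simps)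
  have "g * (N - A * A) > 0" unfolding e1' using A0 t0 g1 by simp
  then have NA: "N - A * A \<noteq> 0" by auto
  have e2': "g * (N - B * B) = B * (1 - g * g)" using F1 unfolding A_def B_def by (simp add: algebra_simps)
  have "g * (N - B * B) > 0" unfolding e2' using B0 g1 by simp
  then have NB: "N - B * B \<noteq> 0" by auto
  have rc: "rel M (L c) y"
  proof (rule gadget[OF h])
    show "(c \<bullet> l) * (c \<bullet> k) = (l \<bullet> k) * (c \<bullet> c)" using cl ck lk F1 by (simp add: N_def)
    show "cross3 c l \<noteq> 0"
    proof
      assume "cross3 c l = 0"
      then have "cross3 c l \<bullet> cross3 c l = 0" by simp
      then show False using NA unfolding lagrange by (simp add: cl ll inner_commute N_def)
    qed
    show "cross3 c k \<noteq> 0"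
    proof
      assume "cross3 c k = 0"
      then have "cross3 c k \<bullet> cross3 c k = 0" by simp
      then show False using NB unfolding lagrange by (simp add: ck kk inner_commute N_def)
    qed
  qed
  have AdN: "A * A = d * d * N"
  proof -
    have "g * (A * A) = g * (d * d * N)"
    proof -
      have "g * (A * A) = A * (A * g)" by (simp add: algebra_simps)
      also have "\<dots> = d * d * (A * B)" using F2 by (simp add: algebra_simps)
      also have "\<dots> = g * (d * d * N)" using F1 by (simp add: algebra_simps)
      finally show ?thesis .
    qed
    then show ?thesis using g by simp
  qed
  have sN: "sqrt N = A / d"
  proof (rule real_sqrt_unique)
    show "(A / d)\<^sup>2 = N" using AdN d0 by (simp add: power2_eq_square field_simps)
    show "0 \<le> A / d" using A0 d0 by simp
  qed
  define s where "s = 1 / sqrt N"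
  have s0: "s \<noteq> 0" using N0 by (simp add: s_def)
  show ?thesis unfolding PR_def
  proof (intro exI conjI)
    show "rel M (L l) y" by (rule h(1))
    show "rel M (L (s *\<^sub>R c)) y" using L_norm[OF s0 rc] .
    show "l \<bullet> l = 1" by (rule ll)
    show "s *\<^sub>R c \<bullet> s *\<^sub>R c = 1" using N0 unfolding s_def N_def[symmetric]
      by (simp add: N_def[symmetric])
    show "l \<bullet> s *\<^sub>R c = d" using cl sN A0 d0 by (simp add: s_def inner_commute)
  qed
qed

lemma PR_iter: "PR y (real j / (real j + 2)) \<Longrightarrow> rel M {0} y"
proof (induction j)
  case 0
  then show ?case using PR_zero by simp
next
  case (Suc j)
  define g where "g = real (Suc j) / (real (Suc j) + 2)"
  have g: "0 < g" "g < 1" unfolding g_def by simp_all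
  have "PR y ((3 * g - 1) / (1 + g))" using shrink[OF g] Suc.prems by (simp add: g_def)
  moreover have "(3 * g - 1) / (1 + g) = real j / (real j + 2)"
  proof -
    define a where "a = real j"
    have a0: "a \<ge> 0" by (simp add: a_def)
    have g': "g = (a + 1) / (a + 3)" unfolding g_def a_def by (simp add: add.commute)
    have n1: "a + 3 \<noteq> 0" "a + 2 \<noteq> 0" using a0 by linarith+
    have "3 * g - 1 = 2 * a / (a + 3)" unfolding g' using n1 by (simp add: field_simps)
    moreover have "1 + g = 2 * (a + 2) / (a + 3)" unfolding g' using n1 by (simp add: field_simps)
    ultimately have "(3 * g - 1) / (1 + g) = (2 * a / (a + 3)) / (2 * (a + 2) / (a + 3))" by simp
    also have "\<dots> = (2 * a) / (2 * (a + 2))"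
    proof -
      have aux: "z \<noteq> 0 \<Longrightarrow> (x / z) / (y / z) = x / (y::real)" for x y z
        by (cases "y = 0") (simp_all add: field_simps)
      show ?thesis using aux n1 by blast
    qed
    also have "\<dots> = a / (a + 2)" by (rule mult_divide_mult_cancel_left) simp
    finally show ?thesis by (simp add: a_def)
  qed
  ultimately show ?case using Suc.IH by simp
qed

lemma KL_real: assumes "PR y g" "g * g < 1" shows "rel M {0} y"
proof -
  have ag: "\<bar>g\<bar> < 1" using assms(2) abs_square_less_1[of g] by (simp add: power2_eq_square)
  have "\<exists>g'. PR y g' \<and> 0 \<le> g' \<and> g' < 1"
  proof (cases "g < 0")
    case True
    then show ?thesis using PR_neg[OF assms(1)] ag
      by (intro exI[of _ "-g"]) auto
  next
    case False
    then show ?thesis using assms ag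
      by (intro exI[of _ g]) auto
  qed
  then obtain g' where g': "PR y g'" "0 \<le> g'" "g' < 1" by blast
  show ?thesis
  proof (cases "g' = 0")
    case True then show ?thesis using PR_zero g' by simp
  next
    case False
    then have gp: "0 < g'" using g' by simp
    define j where "j = nat \<lceil>2 * g' / (1 - g')\<rceil>"
    have "real j \<ge> 2 * g' / (1 - g')" unfolding j_def by linarith
    then have "real j * (1 - g') \<ge> 2 * g'" using g' by (simp add: field_simps)
    then have jg: "real j / (real j + 2) \<ge> g'" by (simp add: field_simps algebra_simps)
    have j1: "real j / (real j + 2) < 1" by simp
    show ?thesis
    proof (cases "real j / (real j + 2) = g'")
      case True then show ?thesis using PR_iter[of y j] g' by simp
    next
      case False
      then have "g' < real j / (real j + 2)" using jg by simp
      then show ?thesis using PR_iter adjust[OF gp _ j1 g'(1)] by blast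
    qed
  qed
qed

end


lemma Emap_e1: "Emap e1 e2 e3 (vector [1, 0, 0]) = e1"
  by (simp add: Emap_def)
lemma Emap_k: "Emap e1 e2 e3 (vector [a, b, 0]) = complex_of_real a *s e1 + complex_of_real b *s e2"
  by (simp add: Emap_def)

lemma cnj_unit: assumes "\<alpha> \<noteq> 0" shows "cnj (\<alpha> / complex_of_real (cmod \<alpha>)) * (\<alpha> / complex_of_real (cmod \<alpha>)) = 1"
proof -
  have "cnj \<alpha> * \<alpha> = complex_of_real ((cmod \<alpha>)^2)" by (metis complex_norm_square mult.commute)
  then show ?thesis using assms by (simp add: field_simps power2_eq_square)
qed

context pqm_loc begin

lemma KLc:
  assumes ra: "rel M (lsp a0) y" and rb: "rel M (lsp b0) y" and a0: "a0 \<noteq> 0"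
    and nind: "\<And>c. b0 \<noteq> c *s a0" and n0: "n \<noteq> 0" and an: "cinner a0 n = 0" and bn: "cinner b0 n = 0"
  shows "rel M {0} y"
proof (cases "cinner a0 b0 = 0")
  case True
  have "lsp a0 \<subseteq> orth (lsp b0)"
  proof
    fix x assume "x \<in> lsp a0"
    then obtain c where x: "x = c *s a0" by (auto simp: lsp_def)
    show "x \<in> orth (lsp b0)" unfolding orth_def
    proof (intro CollectI ballI)
      fix z assume "z \<in> lsp b0"
      then obtain d where z: "z = d *s b0" by (auto simp: lsp_def)
      have "cinner b0 a0 = 0" using True by (metis cinner_commute complex_cnj_zero)
      then show "cinner z x = 0" by (simp add: x z cinner_scale_left cinner_scale_right)
    qed
  qed
  then show ?thesis using bot_of_orth[OF csub_lsp csub_lsp _ ra rb] by blast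
next
  case False
  define \<alpha> where "\<alpha> = cinner a0 b0"
  have \<alpha>0: "\<alpha> \<noteq> 0" using False by (simp add: \<alpha>_def)
  define na where "na = norm a0"
  have na0: "na > 0" using a0 by (simp add: na_def)
  have aa: "cinner a0 a0 = complex_of_real (na * na)" using cinner_self_real[of a0] by (simp add: na_def power2_eq_square)
  define ph where "ph = \<alpha> / complex_of_real (cmod \<alpha>)"
  have ph: "cnj ph * ph = 1" using cnj_unit[OF \<alpha>0] by (simp add: ph_def)
  define e1 where "e1 = (ph / complex_of_real na) *s a0"
  have e1e1: "cinner e1 e1 = 1"
  proof -
    have "cinner e1 e1 = cnj (ph / complex_of_real na) * (ph / complex_of_real na) * complex_of_real (na * na)"
      by (simp add: e1_def cinner_scale_left cinner_scale_right aa)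
    also have "\<dots> = cnj ph * ph" using na0 by (simp add: field_simps)
    finally show ?thesis using ph by simp
  qed
  define g1 where "g1 = cmod \<alpha> / na"
  have g10: "g1 > 0" using \<alpha>0 na0 by (simp add: g1_def)
  have e1b: "cinner e1 b0 = complex_of_real g1"
  proof -
    have "cinner e1 b0 = cnj (ph / complex_of_real na) * \<alpha>" by (simp add: e1_def cinner_scale_left \<alpha>_def)
    also have "\<dots> = cnj \<alpha> * \<alpha> / complex_of_real (cmod \<alpha> * na)" by (simp add: ph_def)
    also have "cnj \<alpha> * \<alpha> = complex_of_real (cmod \<alpha> * cmod \<alpha>)" by (metis complex_norm_square mult.commute power2_eq_square)
    finally show ?thesis using \<alpha>0 na0 by (simp add: g1_def)
  qed
  define b' where "b' = b0 - complex_of_real g1 *s e1"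
  have e1b': "cinner e1 b' = 0" by (simp add: b'_def cinner_diff_right cinner_scale_right e1b e1e1)
  have b'0: "b' \<noteq> 0"
  proof
    assume "b' = 0"
    then have "b0 = (complex_of_real g1 * (ph / complex_of_real na)) *s a0"
      by (simp add: b'_def e1_def vector_smult_assoc)
    then show False using nind by blast
  qed
  define nb where "nb = norm b'"
  have nb0: "nb > 0" using b'0 by (simp add: nb_def)
  have bb: "cinner b' b' = complex_of_real (nb * nb)" using cinner_self_real[of b'] by (simp add: nb_def power2_eq_square)
  define e2 where "e2 = (1 / complex_of_real nb) *s b'"
  have e2e2: "cinner e2 e2 = 1" using nb0 by (simp add: e2_def cinner_scale_left cinner_scale_right bb)
  have e1e2: "cinner e1 e2 = 0" by (simp add: e2_def cinner_scale_right e1b')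
  have b0e: "b0 = complex_of_real g1 *s e1 + complex_of_real nb *s e2"
    using nb0 by (simp add: e2_def b'_def vector_smult_assoc)
  define e3 where "e3 = (1 / complex_of_real (norm n)) *s n"
  have nn: "cinner n n = complex_of_real (norm n * norm n)" using cinner_self_real[of n] by (simp add: power2_eq_square)
  have e3e3: "cinner e3 e3 = 1" using n0 by (simp add: e3_def cinner_scale_left cinner_scale_right nn)
  have e1e3: "cinner e1 e3 = 0" by (simp add: e1_def e3_def cinner_scale_left cinner_scale_right an)
  have e1n: "cinner e1 n = 0" by (simp add: e1_def cinner_scale_left an)
  have e2e3: "cinner e2 e3 = 0"
    by (simp add: e2_def e3_def b'_def cinner_scale_left cinner_scale_right cinner_diff_left bn e1n)
  have onb: "onb3 e1 e2 e3" by (simp add: onb3_def e1e1 e2e2 e3e3 e1e2 e1e3 e2e3)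
  have fl: "frame_loc M e1 e2 e3" by (intro frame_loc.intro pqm_loc_axioms frame_loc_axioms.intro onb)
  define l :: "real^3" where "l = vector [1, 0, 0]"
  define k0 :: "real^3" where "k0 = vector [g1, nb, 0]"
  have "Lk e1 e2 e3 l = lsp a0"
    using na0 ph by (auto simp: Lk_def l_def Emap_e1 e1_def intro!: lsp_scale_eq)
  then have rl: "rel M (Lk e1 e2 e3 l) y" using ra by simp
  have "Lk e1 e2 e3 k0 = lsp b0" by (simp add: Lk_def k0_def Emap_k b0e)
  then have rk0: "rel M (Lk e1 e2 e3 k0) y" using rb by simp
  have kk0: "k0 \<bullet> k0 = g1 * g1 + nb * nb" by (simp add: k0_def inner_vec_def sum_3)
  have "nb * nb > 0" "g1 * g1 \<ge> 0" using nb0 by simp_all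
  then have kk0p: "k0 \<bullet> k0 > 0" unfolding kk0 by linarith
  define s where "s = 1 / sqrt (k0 \<bullet> k0)"
  define k where "k = s *\<^sub>R k0"
  have s0: "s \<noteq> 0" using kk0p by (simp add: s_def)
  have rk: "rel M (Lk e1 e2 e3 k) y" unfolding k_def using frame_loc.L_norm[OF fl s0 rk0] .
  have ll: "l \<bullet> l = 1" by (simp add: l_def inner_vec_def sum_3)
  have kk: "k \<bullet> k = 1" using kk0p by (simp add: k_def s_def)
  have lk: "l \<bullet> k = s * g1" by (simp add: k_def l_def k0_def inner_vec_def sum_3)
  have "(s * g1) * (s * g1) = g1 * g1 / (g1 * g1 + nb * nb)"
    using kk0p unfolding s_def kk0 by (simp add: field_simps)
  also have "\<dots> < 1"
  proof -
    have "g1 * g1 < g1 * g1 + nb * nb" using nb0 by simp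
    moreover have "0 < g1 * g1 + nb * nb" using kk0p kk0 by simp
    ultimately show ?thesis by simp
  qed
  finally have lt: "(s * g1) * (s * g1) < 1" .
  have "frame_loc.PR M e1 e2 e3 y (s * g1)"
    unfolding frame_loc.PR_def[OF fl] using rl rk ll kk lk by blast
  then show ?thesis using frame_loc.KL_real[OF fl _ lt] by blast
qed

end


lemma scale_in_span: assumes "u \<in> S" "\<i> *s u \<in> S" shows "(c::complex) *s u \<in> span S"
proof -
  have "c *s u = Re c *\<^sub>R u + Im c *\<^sub>R (\<i> *s u)"
    unfolding scaleR_vec_conv by (subst complex_split[of c]) (simp add: vector_sadd_rdistrib vector_smult_assoc mult.commute)
  then show ?thesis using assms by (simp add: span_add span_mul span_base)
qed

lemma orth_nontriv: assumes card3: "CARD('n) \<ge> 3"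
  shows "\<exists>n. n \<noteq> 0 \<and> n \<in> orth (ssum (lsp u) (lsp (w::complex^'n)))"
proof (rule ccontr)
  assume H: "\<not> (\<exists>n. n \<noteq> 0 \<and> n \<in> orth (ssum (lsp u) (lsp (w::complex^'n))))"
  define r where "r = ssum (lsp u) (lsp w)"
  have cr: "csubspace r" by (simp add: r_def csub_ssum csub_lsp)
  have "orth r \<subseteq> {0}" using H by (auto simp: r_def)
  then have "orth r = {0}" using csub_0[OF orth_csubspace[of r]] by auto
  then have rU: "r = UNIV" using orth_orth[OF cr] orth_zero by metis
  define S where "S = set [u, \<i> *s u, w, \<i> *s w]"
  have "r \<subseteq> span S"
  proof
    fix z assume "z \<in> r"
    then obtain a b where ab: "a \<in> lsp u" "b \<in> lsp w" "z = a + b" unfolding r_def by (auto elim: ssumE)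
    obtain c d where "a = c *s u" "b = d *s w" using ab by (auto simp: lsp_def)
    moreover have "c *s u \<in> span S" "d *s w \<in> span S" by (rule scale_in_span, simp_all add: S_def)+
    ultimately show "z \<in> span S" using ab by (simp add: span_add)
  qed
  then have "dim (UNIV :: (complex^'n) set) \<le> card S" using rU by (intro dim_le_card) (simp_all add: S_def)
  also have "card S \<le> 4" unfolding S_def using card_length[of "[u, \<i> *s u, w, \<i> *s w]"] by simp
  finally have "DIM(complex^'n) \<le> 4" by (simp add: dim_UNIV)
  then show False using card3 by simp
qed

context pqm_loc begin

lemma Z_add:
  assumes card3: "CARD('n) \<ge> 3"
    and hu: "rel M (orth {u}) x" and hw: "rel M (orth {w}) x"
  shows "rel M (orth {u + w}) x"
proof (cases "\<exists>c. w = c *s u")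
  case True
  then obtain c where "w = c *s u" by blast
  then have "u + w = (1 + c) *s u" by (simp add: vector_sadd_rdistrib)
  then show ?thesis using Z_scale[OF hu] by metis
next
  case nwu: False
  show ?thesis
  proof (cases "\<exists>c. u = c *s w")
    case True
    then obtain c where "u = c *s w" by blast
    then have "u + w = (c + 1) *s w" by (simp add: vector_sadd_rdistrib)
    then show ?thesis using Z_scale[OF hw] by metis
  next
    case nuw: False
    have u0: "u \<noteq> 0" using nuw by (metis vector_smult_lzero)
    have w0: "w \<noteq> 0" using nwu by (metis vector_smult_lzero)
    have uu: "cinner u u \<noteq> 0" using u0 cinner_self_eq0 by blast
    have ww: "cinner w w \<noteq> 0" using w0 cinner_self_eq0 by blast
    define r where "r = ssum (lsp u) (lsp w)"
    have cr: "csubspace r" by (simp add: r_def csub_ssum csub_lsp)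
    have rmem: "c *s u + d *s w \<in> r" for c d unfolding r_def by (intro ssumI lsp_scale)
    define y where "y = pi_fun M r x"
    define \<beta> where "\<beta> = cinner u w / cinner u u"
    define \<gamma> where "\<gamma> = cinner w u / cinner w w"
    define a0 where "a0 = w - \<beta> *s u"
    define b0 where "b0 = u - \<gamma> *s w"
    have a0r: "a0 \<in> r" using rmem[of "- \<beta>" 1] by (simp add: a0_def vector_smult_lneg)
    have b0r: "b0 \<in> r" using rmem[of 1 "- \<gamma>"] by (simp add: b0_def vector_smult_lneg)
    have a00: "a0 \<noteq> 0" using nwu by (simp add: a0_def)
    have ua0: "cinner u a0 = 0" using uu by (simp add: a0_def \<beta>_def cinner_diff_right cinner_scale_right)
    have wb0: "cinner w b0 = 0" using ww by (simp add: b0_def \<gamma>_def cinner_diff_right cinner_scale_right)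
    have sA: "sasaki (orth {u}) r \<subseteq> lsp a0"
    proof
      fix z assume z: "z \<in> sasaki (orth {u}) r"
      then have zr: "z \<in> r" and zs: "z \<in> ssum (orth r) (orth {u})" by (auto simp: sasaki_def)
      obtain o1 q where oq: "o1 \<in> orth r" "q \<in> orth {u}" "z = o1 + q" using zs by (auto elim: ssumE)
      have "u \<in> r" using rmem[of 1 0] by simp
      then have "cinner u o1 = 0" using oq(1) by (simp add: orth_def)
      moreover have "cinner u q = 0" using oq(2) by (simp add: orth_def)
      ultimately have uz: "cinner u z = 0" using oq(3) by (simp add: cinner_add_right)
      obtain a b where "a \<in> lsp u" "b \<in> lsp w" "z = a + b" using zr unfolding r_def by (auto elim: ssumE)
      then obtain c d where cd: "z = c *s u + d *s w" by (auto simp: lsp_def)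
      have "c * cinner u u + d * cinner u w = 0" using uz by (simp add: cd cinner_add_right cinner_scale_right)
      then have "c * cinner u u = - (d * cinner u w)" by (simp only: add_eq_0_iff2)
      then have "c = - d * \<beta>" using uu by (simp add: \<beta>_def field_simps)
      then have "z = d *s a0" by (simp add: cd a0_def vector_ssub_ldistrib vector_smult_assoc vector_smult_lneg mult.commute)
      then show "z \<in> lsp a0" by (simp add: lsp_scale)
    qed
    have sB: "sasaki (orth {w}) r \<subseteq> lsp b0"
    proof
      fix z assume z: "z \<in> sasaki (orth {w}) r"
      then have zr: "z \<in> r" and zs: "z \<in> ssum (orth r) (orth {w})" by (auto simp: sasaki_def)
      obtain o1 q where oq: "o1 \<in> orth r" "q \<in> orth {w}" "z = o1 + q" using zs by (auto elim: ssumE)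
      have "w \<in> r" using rmem[of 0 1] by simp
      then have "cinner w o1 = 0" using oq(1) by (simp add: orth_def)
      moreover have "cinner w q = 0" using oq(2) by (simp add: orth_def)
      ultimately have wz: "cinner w z = 0" using oq(3) by (simp add: cinner_add_right)
      obtain a b where "a \<in> lsp u" "b \<in> lsp w" "z = a + b" using zr unfolding r_def by (auto elim: ssumE)
      then obtain c d where cd: "z = c *s u + d *s w" by (auto simp: lsp_def)
      have "c * cinner w u + d * cinner w w = 0" using wz by (simp add: cd cinner_add_right cinner_scale_right)
      then have "d * cinner w w = - (c * cinner w u)" by (simp only: add_eq_0_iff)
      then have "d = - c * \<gamma>" using ww by (simp add: \<gamma>_def field_simps)
      then have "z = c *s b0" by (simp add: cd b0_def vector_ssub_ldistrib vector_smult_assoc vector_smult_lneg mult.commute)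
      then show "z \<in> lsp b0" by (simp add: lsp_scale)
    qed
    have ra: "rel M (lsp a0) y" unfolding y_def
      using ax_up[OF csub_sasaki[OF orth_csubspace cr] csub_lsp sA ax_pii[OF orth_csubspace cr hu]] .
    have rb: "rel M (lsp b0) y" unfolding y_def
      using ax_up[OF csub_sasaki[OF orth_csubspace cr] csub_lsp sB ax_pii[OF orth_csubspace cr hw]] .
    have nind: "b0 \<noteq> c *s a0" for c
    proof
      assume h: "b0 = c *s a0"
      have ub0: "cinner u b0 = 0" using ua0 by (simp add: h cinner_scale_right)
      have "cinner b0 b0 = cinner u b0 - cnj \<gamma> * cinner w b0"
        by (subst (1) b0_def) (simp add: cinner_diff_left cinner_scale_left)
      then have "cinner b0 b0 = 0" using ub0 wb0 by simp
      then have "b0 = 0" using cinner_self_eq0 by blast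
      then have "u = \<gamma> *s w" by (simp add: b0_def)
      then show False using nuw by blast
    qed
    obtain n where n: "n \<noteq> 0" "n \<in> orth r" using orth_nontriv[OF card3] unfolding r_def by blast
    have an: "cinner a0 n = 0" "cinner b0 n = 0" using n(2) a0r b0r by (auto simp: orth_def)
    have "rel M {0} y" using KLc[OF ra rb a00 nind n(1) an] .
    then have ro: "rel M (orth r) x" using ax_pibot[OF cr] by (simp add: y_def)
    have "u + w \<in> r" using rmem[of 1 1] by simp
    then have "orth r \<subseteq> orth {u + w}" by (auto simp: orth_def)
    then show ?thesis using ax_up[OF orth_csubspace orth_csubspace _ ro] by blast
  qed
qed

end


lemma Ud_inv: assumes "U \<in> Ud"
  shows "U ** matrix_inv U = mat 1" "matrix_inv U ** U = mat 1"
proof -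
  have ex: "\<exists>A'. U ** A' = mat 1 \<and> A' ** U = mat 1" using assms by (auto simp: Ud_def)
  have "U ** matrix_inv U = mat 1 \<and> matrix_inv U ** U = mat 1"
    unfolding matrix_inv_def by (rule someI_ex[OF ex])
  then show "U ** matrix_inv U = mat 1" "matrix_inv U ** U = mat 1" by simp_all
qed

lemma Ud_inv_vec: assumes "U \<in> Ud"
  shows "U *v (matrix_inv U *v v) = v" "matrix_inv U *v (U *v v) = v"
  using Ud_inv[OF assms] by (simp_all add: matrix_vector_mul_assoc)

lemma sasaki_le_lemma:
  assumes ck: "csubspace k" and cp: "csubspace p" and cq: "csubspace q" and pq: "p \<subseteq> q"
    and h: "sasaki k q \<subseteq> orth p"
  shows "k \<subseteq> orth p"
proof
  fix v assume v: "v \<in> k"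
  obtain a b where ab: "a \<in> q" "b \<in> orth q" "v = a + b" using orth_decomp[OF cq] by blast
  have "- b \<in> orth q" using ab orth_csubspace by (metis csubspace_diff diff_0 csub_0)
  then have "(- b) + v \<in> ssum (orth q) k" using v by (rule ssumI)
  moreover have "(- b) + v = a" using ab by simp
  ultimately have "a \<in> sasaki k q" using ab by (simp add: sasaki_def)
  then have "a \<in> orth p" using h by blast
  moreover have "b \<in> orth p" using ab(2) orth_anti[OF pq] by blast
  ultimately show "v \<in> orth p" using ab(3) csub_add[OF orth_csubspace] by blast
qed

context pqm_loc begin

lemma G:
  assumes card3: "CARD('n) \<ge> 3"
    and cp: "csubspace p" and cq: "csubspace q" and rp: "rel M p x" and rq: "rel M q x"
  shows "rel M (p \<inter> q) x"
proof (rule H_rel[OF csub_inter[OF cp cq]], rule ballI)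
  fix v assume v: "v \<in> orth (p \<inter> q)"
  define T where "T = ssum (orth p) (orth q)"
  have cT: "csubspace T" by (simp add: T_def csub_ssum orth_csubspace)
  have pT: "orth p \<subseteq> T" unfolding T_def using ssumI[of _ "orth p" 0 "orth q"] csub_0[OF orth_csubspace] by auto
  have qT: "orth q \<subseteq> T" unfolding T_def using ssumI[of 0 "orth p" _ "orth q"] csub_0[OF orth_csubspace] by auto
  have "orth T \<subseteq> p \<inter> q"
  proof
    fix z assume "z \<in> orth T"
    then have "z \<in> orth (orth p)" "z \<in> orth (orth q)" using pT qT by (auto simp: orth_def)
    then show "z \<in> p \<inter> q" using orth_orth[OF cp] orth_orth[OF cq] by simp
  qed
  then have "orth (p \<inter> q) \<subseteq> T" using orth_anti orth_orth[OF cT] by metis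
  then have "v \<in> ssum (orth p) (orth q)" using v unfolding T_def by blast
  then obtain a b where ab: "a \<in> orth p" "b \<in> orth q" "v = a + b" by (rule ssumE)
  have "rel M (orth {a}) x" using H_conv[OF cp rp ab(1)] .
  moreover have "rel M (orth {b}) x" using H_conv[OF cq rq ab(2)] .
  ultimately show "rel M (orth {v}) x" using Z_add[OF card3] ab(3) by blast
qed

lemma minimal:
  assumes card3: "CARD('n) \<ge> 3"
  shows "\<exists>k. csubspace k \<and> rel M k x \<and> (\<forall>p. csubspace p \<longrightarrow> rel M p x \<longrightarrow> k \<subseteq> p)"
proof -
  let ?P = "\<lambda>n. \<exists>p. csubspace p \<and> rel M p x \<and> dim p = n"
  have ex: "?P (dim (UNIV :: (complex^'n) set))" using csub_UNIV ax_top by blast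
  obtain k where k: "csubspace k" "rel M k x" "dim k = (LEAST n. ?P n)"
    using LeastI_ex[of ?P] ex by blast
  have "k \<subseteq> p" if p: "csubspace p" "rel M p x" for p
  proof -
    have ckp: "csubspace (k \<inter> p)" using csub_inter k(1) p(1) by blast
    have rkp: "rel M (k \<inter> p) x" using G[OF card3 k(1) p(1) k(2) p(2)] .
    have "(LEAST n. ?P n) \<le> dim (k \<inter> p)" using ckp rkp by (intro Least_le) blast
    then have "dim k \<le> dim (k \<inter> p)" using k(3) by simp
    then have "k \<inter> p = k"
      using subspace_dim_equal[OF csubspace_subspace[OF ckp] csubspace_subspace[OF k(1)]] by blast
    then show ?thesis by blast
  qed
  then show ?thesis using k by blast
qed

end


lemma orthI: "(\<And>w. w \<in> S \<Longrightarrow> cinner w v = 0) \<Longrightarrow> v \<in> orth S"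
  by (simp add: orth_def)

theorem mainTheorem15:
  fixes M :: "('m, 'n::finite) lstruct"
  assumes "CARD('n) \<ge> 3"
  shows "PQM_model M \<longleftrightarrow>
    (\<exists>\<kappa> :: 'm \<Rightarrow> (complex^'n) set. strong_morphism M \<kappa> \<and> range \<kappa> \<noteq> {bot_sp})"
proof
  assume h: "PQM_model M"
  interpret P: pqm_loc M by (rule pqm_loc.intro[OF h])
  define \<kappa> where "\<kappa> m = (SOME k. csubspace k \<and> rel M k m \<and> (\<forall>p. csubspace p \<longrightarrow> rel M p m \<longrightarrow> k \<subseteq> p))" for m
  have kap: "csubspace (\<kappa> m) \<and> rel M (\<kappa> m) m \<and> (\<forall>p. csubspace p \<longrightarrow> rel M p m \<longrightarrow> \<kappa> m \<subseteq> p)" for m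
    unfolding \<kappa>_def by (rule someI_ex[OF P.minimal[OF assms]])
  have ck: "csubspace (\<kappa> m)" for m using kap by blast
  have rk: "rel M (\<kappa> m) m" for m using kap by blast
  have krel: "rel M p m \<longleftrightarrow> \<kappa> m \<subseteq> p" if "csubspace p" for p m
    using kap[of m] P.ax_up[OF ck that _ rk] that by blast
  have kpi: "\<kappa> (pi_fun M q m) = sasaki (\<kappa> m) q" if cq: "csubspace q" for q m
  proof -
    define k where "k = \<kappa> m"
    define k' where "k' = \<kappa> (pi_fun M q m)"
    have ck0: "csubspace k" and ck': "csubspace k'" by (simp_all add: k_def k'_def ck)
    have "rel M (sasaki k q) (pi_fun M q m)" using P.ax_pii[OF ck0 cq] rk by (simp add: k_def)
    then have sub1: "k' \<subseteq> sasaki k q" using krel[OF csub_sasaki[OF ck0 cq]] by (simp add: k'_def)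
    then have k'q: "k' \<subseteq> q" by (auto simp: sasaki_def)
    define s where "s = q \<inter> orth k'"
    have cs: "csubspace s" by (simp add: s_def csub_inter cq orth_csubspace)
    have "k' \<subseteq> orth s"
    proof
      fix w assume w: "w \<in> k'"
      show "w \<in> orth s" unfolding orth_def
      proof (intro CollectI ballI)
        fix v assume "v \<in> s"
        then have "v \<in> orth k'" by (simp add: s_def)
        then show "cinner v w = 0" using mem_orth_sym w by blast
      qed
    qed
    then have "rel M (orth s) (pi_fun M q m)" using P.ax_up[OF ck' orth_csubspace _ rk[of "pi_fun M q m", folded k'_def]] by blast
    then have "rel M (orth s) m" using P.transferD[OF cs cq] by (auto simp: s_def)
    then have kos: "k \<subseteq> orth s" using krel[OF orth_csubspace] by (simp add: k_def)
    have sok: "s \<subseteq> orth k"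
    proof
      fix v assume v: "v \<in> s"
      show "v \<in> orth k" unfolding orth_def
      proof (intro CollectI ballI)
        fix w assume "w \<in> k"
        then have "w \<in> orth s" using kos by blast
        then show "cinner w v = 0" using mem_orth_sym v by blast
      qed
    qed
    have sub2: "sasaki k q \<subseteq> k'"
    proof
      fix v assume v: "v \<in> sasaki k q"
      then have vq: "v \<in> q" and "v \<in> ssum (orth q) k" by (auto simp: sasaki_def)
      then obtain t a where ta: "t \<in> orth q" "a \<in> k" "v = t + a" by (auto elim: ssumE)
      have "v \<in> orth (orth k')"
      proof (rule orthI)
        fix z assume z: "z \<in> orth k'"
        obtain z1 z2 where zz: "z1 \<in> q" "z2 \<in> orth q" "z = z1 + z2" using orth_decomp[OF cq] by blast
        have "z2 \<in> orth k'" using zz(2) orth_anti[OF k'q] by blast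
        then have "z1 \<in> orth k'" using csubspace_diff[OF orth_csubspace z, of z2] zz(3) by simp
        then have "z1 \<in> s" using zz(1) by (simp add: s_def)
        then have "z1 \<in> orth k" using sok by blast
        then have "cinner z1 a = 0" using mem_orth_sym ta(2) by blast
        moreover have "cinner z1 t = 0" using ta(1) zz(1) by (simp add: orth_def)
        moreover have "cinner z2 v = 0" using mem_orth_sym[OF zz(2) vq] .
        ultimately show "cinner z v = 0" using zz(3) ta(3) by (simp add: cinner_add_left cinner_add_right)
      qed
      then show "v \<in> k'" using orth_orth[OF ck'] by simp
    qed
    show ?thesis using sub1 sub2 by (simp add: k_def k'_def)
  qed
  have ku: "\<kappa> (u_fun M U m) = app_op U (\<kappa> m)" if U: "U \<in> Ud" for U m
  proof -
    define k where "k = \<kappa> m"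
    define k' where "k' = \<kappa> (u_fun M U m)"
    have ck0: "csubspace k" and ck': "csubspace k'" by (simp_all add: k_def k'_def ck)
    have "rel M (app_op U k) (u_fun M U m)" using P.ax_ui[OF ck0 U] rk by (simp add: k_def)
    then have sub1: "k' \<subseteq> app_op U k" using krel[OF csub_app_op[OF ck0]] by (simp add: k'_def)
    have "rel M (app_op (matrix_inv U) k') m" using P.ax_ue[OF ck' U] rk by (simp add: k'_def)
    then have h2: "k \<subseteq> app_op (matrix_inv U) k'" using krel[OF csub_app_op[OF ck']] by (simp add: k_def)
    have sub2: "app_op U k \<subseteq> k'"
    proof
      fix x assume "x \<in> app_op U k"
      then obtain v where v: "v \<in> k" "x = U *v v" by (auto simp: app_op_def)
      then obtain w where w: "w \<in> k'" "v = matrix_inv U *v w" using h2 by (auto simp: app_op_def)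
      then show "x \<in> k'" using v Ud_inv_vec[OF U] by simp
    qed
    show ?thesis using sub1 sub2 by (simp add: k_def k'_def)
  qed
  have nb: "range \<kappa> \<noteq> {bot_sp}"
  proof
    assume r: "range \<kappa> = {bot_sp}"
    obtain m where m: "\<not> rel M {0} m" using P.ax_nbot by blast
    have "\<kappa> m = {0}" using r by (auto simp: bot_sp_def)
    then show False using m krel[OF csub_zero] by simp
  qed
  have "strong_morphism M \<kappa>"
    unfolding strong_morphism_def Hd_iff using ck krel kpi ku by (simp add: Hd_def)
  then show "\<exists>\<kappa> :: 'm \<Rightarrow> (complex^'n) set. strong_morphism M \<kappa> \<and> range \<kappa> \<noteq> {bot_sp}" using nb by blast
next
  assume "\<exists>\<kappa> :: 'm \<Rightarrow> (complex^'n) set. strong_morphism M \<kappa> \<and> range \<kappa> \<noteq> {bot_sp}"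
  then obtain \<kappa> :: "'m \<Rightarrow> (complex^'n) set" where sm: "strong_morphism M \<kappa>" and rng: "range \<kappa> \<noteq> {bot_sp}" by blast
  have ck: "csubspace (\<kappa> m)" for m using sm by (simp add: strong_morphism_def Hd_iff)
  have R: "rel M p m \<longleftrightarrow> \<kappa> m \<subseteq> p" if "csubspace p" for p m
    using sm that unfolding strong_morphism_def Hd_iff by (simp add: Hd_def)
  have Pi: "\<kappa> (pi_fun M q m) = sasaki (\<kappa> m) q" if "csubspace q" for q m
    using sm that unfolding strong_morphism_def by (simp add: Hd_def)
  have Uu: "\<kappa> (u_fun M U m) = app_op U (\<kappa> m)" if "U \<in> Ud" for U m
    using sm that unfolding strong_morphism_def by simp
  have c1: "\<exists>x. \<not> rel M bot_sp x"
  proof -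
    obtain m where m: "\<kappa> m \<noteq> bot_sp" using rng by blast
    have "\<not> rel M bot_sp m"
    proof
      assume "rel M bot_sp m"
      then have "\<kappa> m \<subseteq> {0}" using R[OF csub_zero] by (simp add: bot_sp_def)
      then show False using m csub_0[OF ck] by (auto simp: bot_sp_def)
    qed
    then show ?thesis by blast
  qed
  have c2: "\<forall>x. rel M top_sp x" using R[OF csub_UNIV] by (simp add: top_sp_def)
  have c3: "\<forall>p\<in>(Hd::(complex^'n) set set). \<forall>q\<in>(Hd::(complex^'n) set set). p \<subseteq> q \<longrightarrow> (\<forall>x. rel M p x \<longrightarrow> rel M q x)"
  proof (intro ballI impI allI)
    fix p q :: "(complex^'n) set" and x assume "p \<in> Hd" "q \<in> Hd" "p \<subseteq> q" "rel M p x"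
    then show "rel M q x" using R by (auto simp: Hd_iff)
  qed
  have c4: "\<forall>p\<in>(Hd::(complex^'n) set set). \<forall>q\<in>(Hd::(complex^'n) set set). compatible p q \<longrightarrow> (\<forall>x. rel M p x \<and> rel M q x \<longrightarrow> rel M (p \<inter> q) x)"
  proof (intro ballI impI allI)
    fix p q :: "(complex^'n) set" and x assume "p \<in> Hd" "q \<in> Hd" "compatible p q" "rel M p x \<and> rel M q x"
    then have cp: "csubspace p" and cq: "csubspace q" and "\<kappa> x \<subseteq> p" "\<kappa> x \<subseteq> q"
      using R by (auto simp: Hd_iff)
    then show "rel M (p \<inter> q) x" using R[OF csub_inter[OF cp cq]] by blast
  qed
  have c5: "\<forall>p\<in>(Hd::(complex^'n) set set). \<forall>q\<in>(Hd::(complex^'n) set set). \<forall>x. rel M p x \<longrightarrow> rel M (sasaki p q) (pi_fun M q x)"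
  proof (intro ballI impI allI)
    fix p q :: "(complex^'n) set" and x assume "p \<in> Hd" "q \<in> Hd" and rx: "rel M p x"
    then have cp: "csubspace p" and cq: "csubspace q" by (simp_all add: Hd_iff)
    have "\<kappa> x \<subseteq> p" using R[OF cp] rx by blast
    then have "\<kappa> (pi_fun M q x) \<subseteq> sasaki p q" using Pi[OF cq] sasaki_mono by metis
    then show "rel M (sasaki p q) (pi_fun M q x)" using R[OF csub_sasaki[OF cp cq]] by blast
  qed
  have c6: "\<forall>p\<in>(Hd::(complex^'n) set set). \<forall>q\<in>(Hd::(complex^'n) set set). p \<subseteq> q \<longrightarrow>
        (\<forall>x. rel M bot_sp (pi_fun M p (pi_fun M q x)) \<longrightarrow> rel M bot_sp (pi_fun M p x))"
  proof (intro ballI impI allI)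
    fix p q :: "(complex^'n) set" and x assume "p \<in> Hd" "q \<in> Hd" and pq: "p \<subseteq> q" and rb: "rel M bot_sp (pi_fun M p (pi_fun M q x))"
    then have cp: "csubspace p" and cq: "csubspace q" by (simp_all add: Hd_iff)
    have "sasaki (sasaki (\<kappa> x) q) p \<subseteq> {0}" using rb R[OF csub_zero] Pi[OF cp] Pi[OF cq] by (simp add: bot_sp_def)
    then have "sasaki (\<kappa> x) q \<subseteq> orth p" using sasaki_zero_iff[OF csub_sasaki[OF ck cq] cp] by blast
    then have "\<kappa> x \<subseteq> orth p" using sasaki_le_lemma[OF ck cp cq pq] by blast
    then have "sasaki (\<kappa> x) p \<subseteq> {0}" using sasaki_zero_iff[OF ck cp] by blast
    then show "rel M bot_sp (pi_fun M p x)" using R[OF csub_zero] Pi[OF cp] by (simp add: bot_sp_def)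
  qed
  have c7: "\<forall>q\<in>(Hd::(complex^'n) set set). \<forall>x. rel M bot_sp (pi_fun M q x) \<longrightarrow> rel M (orth q) x"
  proof (intro ballI impI allI)
    fix q :: "(complex^'n) set" and x assume "q \<in> Hd" and rb: "rel M bot_sp (pi_fun M q x)"
    then have cq: "csubspace q" by (simp_all add: Hd_iff)
    have "sasaki (\<kappa> x) q \<subseteq> {0}" using rb R[OF csub_zero] Pi[OF cq] by (simp add: bot_sp_def)
    then have "\<kappa> x \<subseteq> orth q" using sasaki_zero_iff[OF ck cq] by blast
    then show "rel M (orth q) x" using R[OF orth_csubspace] by blast
  qed
  have c8: "\<forall>p\<in>(Hd::(complex^'n) set set). \<forall>U\<in>Ud. \<forall>x. rel M p x \<longrightarrow> rel M (app_op U p) (u_fun M U x)"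
  proof (intro ballI impI allI)
    fix p :: "(complex^'n) set" and U :: "complex^'n^'n" and x assume "p \<in> Hd" and U: "U \<in> Ud" and rx: "rel M p x"
    then have cp: "csubspace p" by (simp_all add: Hd_iff)
    have "\<kappa> x \<subseteq> p" using R[OF cp] rx by blast
    then have "app_op U (\<kappa> x) \<subseteq> app_op U p" by (auto simp: app_op_def)
    then show "rel M (app_op U p) (u_fun M U x)" using R[OF csub_app_op[OF cp]] Uu[OF U] by simp
  qed
  have c9: "\<forall>p\<in>(Hd::(complex^'n) set set). \<forall>U\<in>Ud. \<forall>x. rel M p (u_fun M U x) \<longrightarrow> rel M (app_op (matrix_inv U) p) x"
  proof (intro ballI impI allI)
    fix p :: "(complex^'n) set" and U :: "complex^'n^'n" and x assume "p \<in> Hd" and U: "U \<in> Ud" and rx: "rel M p (u_fun M U x)"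
    then have cp: "csubspace p" by (simp_all add: Hd_iff)
    have h: "app_op U (\<kappa> x) \<subseteq> p" using R[OF cp] rx Uu[OF U] by simp
    have "\<kappa> x \<subseteq> app_op (matrix_inv U) p"
    proof
      fix v assume "v \<in> \<kappa> x"
      then have "U *v v \<in> p" using h by (auto simp: app_op_def)
      moreover have "v = matrix_inv U *v (U *v v)" using Ud_inv_vec[OF U] by simp
      ultimately show "v \<in> app_op (matrix_inv U) p" by (auto simp: app_op_def)
    qed
    then show "rel M (app_op (matrix_inv U) p) x" using R[OF csub_app_op[OF cp]] by blast
  qed
  show "PQM_model M" using c1 c2 c3 c4 c5 c6 c7 c8 c9 unfolding PQM_model_def by (intro conjI) assumption+
qed


end
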